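(* For every $n\ge1$, there is an equivalence relation on $\mathbb{N}$ which is universal for $\Sigma^0_n$ equivalence relations on $\mathbb{N}$ under computable reductions and which is $\Pi^0_{n-1}$-graphable with diameter $3$.
   Context: $E$ is universal for $\Sigma^0_n$ equivalence relations on $\mathbb{N}$ if $E$ is a $\Sigma^0_n$ equivalence relation on $\mathbb{N}$ and every $\Sigma^0_n$ equivalence relation $F$ on $\mathbb{N}$ admits a total computable $f:\mathbb{N}\to\mathbb{N}$ with $nFm\iff f(n)Ef(m)$. $\Pi^0_0$ means computable. $E$ is $\Gamma$-graphable with diameter $k$ if there is a simple undirected graph $G$ in $\Gamma$ whose connectedness relation equals $E$ and $k$ is the least integer such that any two $G$-connected points are joined by a path of length at most $k$. *)

theory Defs
  imports Main
begin

inductive recfn :: "nat \<Rightarrow> (nat list \<Rightarrow> nat) \<Rightarrow> bool" where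
  zero: "recfn n (\<lambda>_. 0)"
| succ: "recfn 1 (\<lambda>xs. Suc (hd xs))"
| proj: "i < n \<Longrightarrow> recfn n (\<lambda>xs. xs ! i)"
| comp: "recfn m f \<Longrightarrow> length gs = m \<Longrightarrow> (\<forall>g\<in>set gs. recfn n g) \<Longrightarrow>
         recfn n (\<lambda>xs. f (map (\<lambda>g. g xs) gs))"
| prim: "recfn n g \<Longrightarrow> recfn (n + 2) h \<Longrightarrow>
         recfn (Suc n) (\<lambda>xs. rec_nat (g (tl xs)) (\<lambda>k r. h (k # r # tl xs)) (hd xs))"
| mu: "recfn (Suc n) g \<Longrightarrow> (\<forall>xs. length xs = n \<longrightarrow> (\<exists>y. g (y # xs) = 0)) \<Longrightarrow>
       recfn n (\<lambda>xs. LEAST y. g (y # xs) = 0)"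

definition computable_fun :: "(nat \<Rightarrow> nat) \<Rightarrow> bool" where
  "computable_fun f \<longleftrightarrow> (\<exists>g. recfn 1 g \<and> (\<forall>x. g [x] = f x))"

definition computable_rel :: "nat \<Rightarrow> (nat list \<Rightarrow> bool) \<Rightarrow> bool" where
  "computable_rel k P \<longleftrightarrow>
     (\<exists>g. recfn k g \<and> (\<forall>xs. length xs = k \<longrightarrow> (P xs \<longleftrightarrow> g xs = 0)))"

primrec Sigma_rel :: "nat \<Rightarrow> nat \<Rightarrow> (nat list \<Rightarrow> bool) \<Rightarrow> bool" where
  "Sigma_rel 0 k P = computable_rel k P"
| "Sigma_rel (Suc n) k P =
     (\<exists>Q. Sigma_rel n (Suc k) (\<lambda>xs. \<not> Q xs) \<and>
          (\<forall>xs. length xs = k \<longrightarrow> (P xs \<longleftrightarrow> (\<exists>y. Q (y # xs)))))"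

definition Pi_rel :: "nat \<Rightarrow> nat \<Rightarrow> (nat list \<Rightarrow> bool) \<Rightarrow> bool" where
  "Pi_rel n k P \<longleftrightarrow> Sigma_rel n k (\<lambda>xs. \<not> P xs)"

definition as_rel2 :: "(nat \<times> nat) set \<Rightarrow> nat list \<Rightarrow> bool" where
  "as_rel2 R = (\<lambda>xs. (xs ! 0, xs ! 1) \<in> R)"

definition Sigma_binrel :: "nat \<Rightarrow> (nat \<times> nat) set \<Rightarrow> bool" where
  "Sigma_binrel n R \<longleftrightarrow> Sigma_rel n 2 (as_rel2 R)"

definition Pi_binrel :: "nat \<Rightarrow> (nat \<times> nat) set \<Rightarrow> bool" where
  "Pi_binrel n R \<longleftrightarrow> Pi_rel n 2 (as_rel2 R)"

definition universal_Sigma_eqrel :: "nat \<Rightarrow> (nat \<times> nat) set \<Rightarrow> bool" where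
  "universal_Sigma_eqrel n E \<longleftrightarrow>
     equiv UNIV E \<and> Sigma_binrel n E \<and>
     (\<forall>F. equiv UNIV F \<and> Sigma_binrel n F \<longrightarrow>
        (\<exists>f. computable_fun f \<and> (\<forall>x y. (x, y) \<in> F \<longleftrightarrow> (f x, f y) \<in> E)))"

definition simple_graph :: "(nat \<times> nat) set \<Rightarrow> bool" where
  "simple_graph G \<longleftrightarrow> sym G \<and> irrefl G"

definition paths_bounded :: "(nat \<times> nat) set \<Rightarrow> nat \<Rightarrow> bool" where
  "paths_bounded G k \<longleftrightarrow> (\<forall>x y. (x, y) \<in> G\<^sup>* \<longrightarrow> (\<exists>m\<le>k. (x, y) \<in> G ^^ m))"

definition graph_diameter :: "(nat \<times> nat) set \<Rightarrow> nat \<Rightarrow> bool" where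
  "graph_diameter G k \<longleftrightarrow> paths_bounded G k \<and> (\<forall>j<k. \<not> paths_bounded G j)"

definition Pi_graphable_diam :: "nat \<Rightarrow> (nat \<times> nat) set \<Rightarrow> nat \<Rightarrow> bool" where
  "Pi_graphable_diam m E k \<longleftrightarrow>
     (\<exists>G. simple_graph G \<and> Pi_binrel m G \<and> G\<^sup>* = E \<and> graph_diameter G k)"

end

theory Submission
  imports Defs "HOL-Library.Nat_Bijection"
begin

definition rf :: "nat \<Rightarrow> (nat list \<Rightarrow> nat) \<Rightarrow> bool" where
  "rf n f \<longleftrightarrow> (\<exists>g. recfn n g \<and> (\<forall>xs. length xs = n \<longrightarrow> g xs = f xs))"

lemma rf_cong: "rf n f \<Longrightarrow> (\<And>xs. length xs = n \<Longrightarrow> f xs = g xs) \<Longrightarrow> rf n g"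
  unfolding rf_def by metis

lemma rf_zero: "rf n (\<lambda>_. 0)"
  unfolding rf_def using recfn.zero by blast

lemma rf_proj: "i < n \<Longrightarrow> rf n (\<lambda>xs. xs ! i)"
  unfolding rf_def using recfn.proj by blast

lemma rf_succ1: "rf 1 (\<lambda>xs. Suc (xs ! 0))"
  unfolding rf_def
  apply (rule exI[of _ "\<lambda>xs. Suc (hd xs)"])
  apply (rule conjI)
   apply (rule recfn.succ)
  apply (auto simp: hd_conv_nth length_Suc_conv)
  done

lemma recfn_list_choice:
  assumes "\<forall>g\<in>set gs. rf n g"
  shows "\<exists>gs'. length gs' = length gs \<and> (\<forall>g\<in>set gs'. recfn n g) \<and>
     (\<forall>xs. length xs = n \<longrightarrow> map (\<lambda>g. g xs) gs' = map (\<lambda>g. g xs) gs)"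
  using assms
proof (induction gs)
  case Nil
  then show ?case by auto
next
  case (Cons g gs)
  then obtain gs' where gs': "length gs' = length gs" "\<forall>g\<in>set gs'. recfn n g"
     "\<forall>xs. length xs = n \<longrightarrow> map (\<lambda>g. g xs) gs' = map (\<lambda>g. g xs) gs" by auto
  from Cons.prems obtain g' where "recfn n g'" "\<forall>xs. length xs = n \<longrightarrow> g' xs = g xs"
    unfolding rf_def by auto
  with gs' show ?case by (intro exI[of _ "g' # gs'"]) auto
qed

lemma rf_comp:
  assumes "rf m f" "length gs = m" "\<forall>g\<in>set gs. rf n g"
  shows "rf n (\<lambda>xs. f (map (\<lambda>g. g xs) gs))"
proof -
  obtain f' where f': "recfn m f'" "\<forall>xs. length xs = m \<longrightarrow> f' xs = f xs"
    using assms(1) unfolding rf_def by auto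
  obtain gs' where gs': "length gs' = length gs" "\<forall>g\<in>set gs'. recfn n g"
     "\<forall>xs. length xs = n \<longrightarrow> map (\<lambda>g. g xs) gs' = map (\<lambda>g. g xs) gs"
    using recfn_list_choice[OF assms(3)] by auto
  have "recfn n (\<lambda>xs. f' (map (\<lambda>g. g xs) gs'))"
    using recfn.comp[OF f'(1)] gs' assms(2) by auto
  moreover have "\<forall>xs. length xs = n \<longrightarrow> f' (map (\<lambda>g. g xs) gs') = f (map (\<lambda>g. g xs) gs)"
    using gs' f' assms(2) by auto
  ultimately show ?thesis unfolding rf_def by blast
qed

lemma rf_prim:
  assumes "rf n g" "rf (n + 2) h" "m = Suc n"
  shows "rf m (\<lambda>xs. rec_nat (g (tl xs)) (\<lambda>k r. h (k # r # tl xs)) (hd xs))"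
proof -
  obtain g' where g': "recfn n g'" "\<forall>xs. length xs = n \<longrightarrow> g' xs = g xs"
    using assms(1) unfolding rf_def by auto
  obtain h' where h': "recfn (n+2) h'" "\<forall>xs. length xs = n + 2 \<longrightarrow> h' xs = h xs"
    using assms(2) unfolding rf_def by auto
  have "recfn (Suc n) (\<lambda>xs. rec_nat (g' (tl xs)) (\<lambda>k r. h' (k # r # tl xs)) (hd xs))"
    using recfn.prim[OF g'(1) h'(1)] .
  then have "recfn m (\<lambda>xs. rec_nat (g' (tl xs)) (\<lambda>k r. h' (k # r # tl xs)) (hd xs))"
    using assms(3) by simp
  moreover have "rec_nat (g' (tl xs)) (\<lambda>k r. h' (k # r # tl xs)) j =
      rec_nat (g (tl xs)) (\<lambda>k r. h (k # r # tl xs)) j" if "length xs = m" for xs j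
  proof -
    have e1: "g' (tl xs) = g (tl xs)" using that g'(2) assms(3) by simp
    have e2: "h' (k # r # tl xs) = h (k # r # tl xs)" for k r using that h'(2) assms(3) by simp
    show ?thesis by (induction j) (simp_all add: e1 e2)
  qed
  ultimately show ?thesis unfolding rf_def by blast
qed

lemma rf_mu:
  assumes "rf (Suc n) g" "\<forall>xs. length xs = n \<longrightarrow> (\<exists>y. g (y # xs) = 0)"
  shows "rf n (\<lambda>xs. LEAST y. g (y # xs) = 0)"
proof -
  obtain g' where g': "recfn (Suc n) g'" "\<forall>xs. length xs = Suc n \<longrightarrow> g' xs = g xs"
    using assms(1) unfolding rf_def by auto
  have ex: "\<forall>xs. length xs = n \<longrightarrow> (\<exists>y. g' (y # xs) = 0)"
  proof (intro allI impI)
    fix xs :: "nat list" assume l: "length xs = n"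
    then obtain y where "g (y # xs) = 0" using assms(2) by blast
    moreover have "g' (y # xs) = g (y # xs)" using g'(2) l by simp
    ultimately show "\<exists>y. g' (y # xs) = 0" by auto
  qed
  have "recfn n (\<lambda>xs. LEAST y. g' (y # xs) = 0)"
    by (rule recfn.mu[OF g'(1) ex])
  moreover have "(LEAST y. g' (y # xs) = 0) = (LEAST y. g (y # xs) = 0)" if "length xs = n" for xs
  proof -
    have "\<And>y. g' (y # xs) = g (y # xs)" using g'(2) that by simp
    then show ?thesis by simp
  qed
  ultimately show ?thesis unfolding rf_def by blast
qed

lemma rf_comp1: "rf 1 f \<Longrightarrow> rf n g \<Longrightarrow> rf n (\<lambda>xs. f [g xs])"
  using rf_comp[of 1 f "[g]" n] by auto

lemma rf_comp2: "rf 2 f \<Longrightarrow> rf n g \<Longrightarrow> rf n h \<Longrightarrow> rf n (\<lambda>xs. f [g xs, h xs])"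
  using rf_comp[of 2 f "[g, h]" n] by auto

lemma rf_comp3: "rf 3 f \<Longrightarrow> rf n g \<Longrightarrow> rf n h \<Longrightarrow> rf n i \<Longrightarrow> rf n (\<lambda>xs. f [g xs, h xs, i xs])"
  using rf_comp[of 3 f "[g, h, i]" n] by (auto simp: numeral_3_eq_3)

lemma rf_lift1: "rf 1 (\<lambda>xs. F (xs ! 0)) \<Longrightarrow> rf n g \<Longrightarrow> rf n (\<lambda>xs. F (g xs))"
  using rf_comp1[of "\<lambda>xs. F (xs ! 0)" n g] by simp

lemma rf_lift2: "rf 2 (\<lambda>xs. F (xs ! 0) (xs ! 1)) \<Longrightarrow> rf n g \<Longrightarrow> rf n h \<Longrightarrow> rf n (\<lambda>xs. F (g xs) (h xs))"
  using rf_comp2[of "\<lambda>xs. F (xs ! 0) (xs ! 1)" n g h] by simp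

lemma rf_lift3: "rf 3 (\<lambda>xs. F (xs ! 0) (xs ! 1) (xs ! 2)) \<Longrightarrow> rf n g \<Longrightarrow> rf n h \<Longrightarrow> rf n i
   \<Longrightarrow> rf n (\<lambda>xs. F (g xs) (h xs) (i xs))"
  using rf_comp3[of "\<lambda>xs. F (xs ! 0) (xs ! 1) (xs ! 2)" n g h i] by simp

lemma rf_Suc: "rf n g \<Longrightarrow> rf n (\<lambda>xs. Suc (g xs))"
  using rf_lift1[OF rf_succ1] .

lemma rf_const: "rf n (\<lambda>_. c)"
  by (induction c) (auto intro: rf_zero rf_Suc[of n "\<lambda>_. _", simplified])

lemma len2: "length xs = 2 \<Longrightarrow> xs = [xs ! 0, xs ! 1]"
  by (cases xs; cases "tl xs"; auto)

lemma len1: "length xs = 1 \<Longrightarrow> xs = [xs ! 0]"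
  by (cases xs; auto)

lemma rf_add0: "rf 2 (\<lambda>xs. xs ! 0 + xs ! 1)"
proof -
  have "rf 2 (\<lambda>xs. rec_nat ((\<lambda>xs. xs ! 0) (tl xs)) (\<lambda>k r. (\<lambda>xs. Suc (xs ! 1)) (k # r # tl xs)) (hd xs))"
    by (rule rf_prim; (intro rf_proj rf_Suc)?; simp?)
  then show ?thesis
  proof (rule rf_cong)
    fix xs :: "nat list" assume "length xs = 2"
    then obtain a b where xs: "xs = [a, b]" using len2 by metis
    show "rec_nat (tl xs ! 0) (\<lambda>k r. Suc ((k # r # tl xs) ! 1)) (hd xs) = xs ! 0 + xs ! 1"
      unfolding xs by (induction a) auto
  qed
qed

lemma rf_mult0: "rf 2 (\<lambda>xs. xs ! 0 * xs ! 1)"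
proof -
  have "rf 2 (\<lambda>xs. rec_nat ((\<lambda>xs. 0) (tl xs)) (\<lambda>k r. (\<lambda>xs. xs ! 1 + xs ! 2) (k # r # tl xs)) (hd xs))"
    by (rule rf_prim; (intro rf_zero rf_lift2[OF rf_add0] rf_proj)?; simp?)
  then show ?thesis
  proof (rule rf_cong)
    fix xs :: "nat list" assume "length xs = 2"
    then obtain a b where xs: "xs = [a, b]" using len2 by metis
    show "rec_nat 0 (\<lambda>k r. (k # r # tl xs) ! 1 + (k # r # tl xs) ! 2) (hd xs) = xs ! 0 * xs ! 1"
      unfolding xs by (induction a) (auto simp: numeral_2_eq_2)
  qed
qed

lemma rf_pred0: "rf 1 (\<lambda>xs. xs ! 0 - 1)"
proof -
  have "rf 1 (\<lambda>xs. rec_nat ((\<lambda>xs. 0) (tl xs)) (\<lambda>k r. (\<lambda>xs. xs ! 0) (k # r # tl xs)) (hd xs))"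
    by (rule rf_prim; (intro rf_zero rf_proj)?; simp?)
  then show ?thesis
  proof (rule rf_cong)
    fix xs :: "nat list" assume "length xs = 1"
    then obtain a where xs: "xs = [a]" using len1 by metis
    show "rec_nat 0 (\<lambda>k r. (k # r # tl xs) ! 0) (hd xs) = xs ! 0 - 1"
      unfolding xs by (cases a) auto
  qed
qed

lemma rf_monus0: "rf 2 (\<lambda>xs. xs ! 1 - xs ! 0)"
proof -
  have "rf 2 (\<lambda>xs. rec_nat ((\<lambda>xs. xs ! 0) (tl xs)) (\<lambda>k r. (\<lambda>xs. xs ! 1 - 1) (k # r # tl xs)) (hd xs))"
    by (rule rf_prim; (intro rf_lift1[OF rf_pred0] rf_proj)?; simp?)
  then show ?thesis
  proof (rule rf_cong)
    fix xs :: "nat list" assume "length xs = 2"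
    then obtain a b where xs: "xs = [a, b]" using len2 by metis
    show "rec_nat (tl xs ! 0) (\<lambda>k r. (k # r # tl xs) ! 1 - 1) (hd xs) = xs ! 1 - xs ! 0"
      unfolding xs by (induction a) auto
  qed
qed

lemma rf_add: "rf n f \<Longrightarrow> rf n g \<Longrightarrow> rf n (\<lambda>xs. f xs + g xs)"
  by (rule rf_lift2[OF rf_add0])

lemma rf_mult: "rf n f \<Longrightarrow> rf n g \<Longrightarrow> rf n (\<lambda>xs. f xs * g xs)"
  by (rule rf_lift2[OF rf_mult0])

lemma rf_minus: "rf n f \<Longrightarrow> rf n g \<Longrightarrow> rf n (\<lambda>xs. f xs - g xs)"
  using rf_lift2[OF rf_monus0, of n g f] by simp

lemma rf_shift:
  assumes "rf (Suc m) f" "rf (m + j) b"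
  shows "rf (m + j) (\<lambda>ys. f (b ys # drop j ys))"
proof -
  let ?gs = "b # map (\<lambda>i ys. ys ! (i + j)) [0..<m]"
  have "rf (m + j) (\<lambda>ys. f (map (\<lambda>g. g ys) ?gs))"
    using assms by (intro rf_comp) (auto intro: rf_proj)
  then show ?thesis
  proof (rule rf_cong)
    fix ys :: "nat list" assume "length ys = m + j"
    then have "map (\<lambda>g. g ys) ?gs = b ys # drop j ys"
      by (auto intro!: nth_equalityI simp: add.commute)
    then show "f (map (\<lambda>g. g ys) ?gs) = f (b ys # drop j ys)" by simp
  qed
qed

lemma rf_drop:
  assumes "rf m f"
  shows "rf (m + j) (\<lambda>ys. f (drop j ys))"
proof -
  let ?gs = "map (\<lambda>i ys. ys ! (i + j)) [0..<m]"
  have "rf (m + j) (\<lambda>ys. f (map (\<lambda>g. g ys) ?gs))"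
    using assms by (intro rf_comp) (auto intro: rf_proj)
  then show ?thesis
  proof (rule rf_cong)
    fix ys :: "nat list" assume "length ys = m + j"
    then have "map (\<lambda>g. g ys) ?gs = drop j ys"
      by (auto intro!: nth_equalityI simp: add.commute)
    then show "f (map (\<lambda>g. g ys) ?gs) = f (drop j ys)" by simp
  qed
qed

definition crel :: "nat \<Rightarrow> (nat list \<Rightarrow> bool) \<Rightarrow> bool" where
  "crel k P \<longleftrightarrow> (\<exists>g. rf k g \<and> (\<forall>xs. length xs = k \<longrightarrow> (P xs \<longleftrightarrow> g xs = 0)))"

lemma computable_rel_crel: "computable_rel k P \<longleftrightarrow> crel k P"
proof
  assume "computable_rel k P"
  then obtain g where "recfn k g" "\<forall>xs. length xs = k \<longrightarrow> (P xs \<longleftrightarrow> g xs = 0)"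
    unfolding computable_rel_def by auto
  then show "crel k P" unfolding crel_def rf_def by blast
next
  assume "crel k P"
  then obtain g g' where "\<forall>xs. length xs = k \<longrightarrow> (P xs \<longleftrightarrow> g xs = 0)" "recfn k g'"
     "\<forall>xs. length xs = k \<longrightarrow> g' xs = g xs"
    unfolding crel_def rf_def by auto
  then show "computable_rel k P" unfolding computable_rel_def by (intro exI[of _ g']) auto
qed

lemma crel_cong: "crel k P \<Longrightarrow> (\<And>xs. length xs = k \<Longrightarrow> P xs \<longleftrightarrow> Q xs) \<Longrightarrow> crel k Q"
  unfolding crel_def by metis

lemma crel_intro: "rf k g \<Longrightarrow> (\<And>xs. length xs = k \<Longrightarrow> P xs \<longleftrightarrow> g xs = 0) \<Longrightarrow> crel k P"
  unfolding crel_def by blast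

lemma crel_eq: "rf k f \<Longrightarrow> rf k g \<Longrightarrow> crel k (\<lambda>xs. f xs = g xs)"
  by (rule crel_intro[of k "\<lambda>xs. (f xs - g xs) + (g xs - f xs)"]) (auto intro: rf_add rf_minus)

lemma crel_le: "rf k f \<Longrightarrow> rf k g \<Longrightarrow> crel k (\<lambda>xs. f xs \<le> g xs)"
  by (rule crel_intro[of k "\<lambda>xs. f xs - g xs"]) (auto intro: rf_add rf_minus)

lemma crel_less: "rf k f \<Longrightarrow> rf k g \<Longrightarrow> crel k (\<lambda>xs. f xs < g xs)"
  by (rule crel_intro[of k "\<lambda>xs. Suc (f xs) - g xs"]) (auto intro: rf_Suc rf_minus)

lemma crel_and: "crel k P \<Longrightarrow> crel k Q \<Longrightarrow> crel k (\<lambda>xs. P xs \<and> Q xs)"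
proof -
  assume "crel k P" "crel k Q"
  then obtain g h where "rf k g" "\<forall>xs. length xs = k \<longrightarrow> (P xs \<longleftrightarrow> g xs = 0)"
    "rf k h" "\<forall>xs. length xs = k \<longrightarrow> (Q xs \<longleftrightarrow> h xs = 0)" unfolding crel_def by auto
  then show ?thesis by (intro crel_intro[of k "\<lambda>xs. g xs + h xs"] rf_add) auto
qed

lemma crel_or: "crel k P \<Longrightarrow> crel k Q \<Longrightarrow> crel k (\<lambda>xs. P xs \<or> Q xs)"
proof -
  assume "crel k P" "crel k Q"
  then obtain g h where "rf k g" "\<forall>xs. length xs = k \<longrightarrow> (P xs \<longleftrightarrow> g xs = 0)"
    "rf k h" "\<forall>xs. length xs = k \<longrightarrow> (Q xs \<longleftrightarrow> h xs = 0)" unfolding crel_def by auto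
  then show ?thesis by (intro crel_intro[of k "\<lambda>xs. g xs * h xs"] rf_mult) auto
qed

lemma crel_not: "crel k P \<Longrightarrow> crel k (\<lambda>xs. \<not> P xs)"
proof -
  assume "crel k P"
  then obtain g where "rf k g" "\<forall>xs. length xs = k \<longrightarrow> (P xs \<longleftrightarrow> g xs = 0)"
    unfolding crel_def by auto
  then show ?thesis by (intro crel_intro[of k "\<lambda>xs. 1 - g xs"] rf_minus rf_const) auto
qed

lemma crel_imp: "crel k P \<Longrightarrow> crel k Q \<Longrightarrow> crel k (\<lambda>xs. P xs \<longrightarrow> Q xs)"
  using crel_or[OF crel_not] by simp

lemma crel_const: "crel k (\<lambda>_. b)"
  by (cases b) (rule crel_intro[of k "\<lambda>_. if b then 0 else 1"]; simp add: rf_const)+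

lemma rf_if:
  assumes "crel k P" "rf k f" "rf k g"
  shows "rf k (\<lambda>xs. if P xs then f xs else g xs)"
proof -
  obtain c where c: "rf k c" "\<forall>xs. length xs = k \<longrightarrow> (P xs \<longleftrightarrow> c xs = 0)"
    using assms(1) unfolding crel_def by auto
  have "rf k (\<lambda>xs. (1 - c xs) * f xs + (1 - (1 - c xs)) * g xs)"
    using assms c by (intro rf_add rf_mult rf_minus rf_const) auto
  then show ?thesis
    by (rule rf_cong) (use c in auto)
qed

lemma rf_mu':
  assumes "crel (Suc k) P" "\<forall>xs. length xs = k \<longrightarrow> (\<exists>y. P (y # xs))"
  shows "rf k (\<lambda>xs. LEAST y. P (y # xs))"
proof -
  obtain c where c: "rf (Suc k) c" "\<forall>xs. length xs = Suc k \<longrightarrow> (P xs \<longleftrightarrow> c xs = 0)"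
    using assms(1) unfolding crel_def by auto
  have "rf k (\<lambda>xs. LEAST y. c (y # xs) = 0)"
    using assms(2) c by (intro rf_mu) auto
  then show ?thesis
    by (rule rf_cong) (use c in auto)
qed

lemma crel_comp:
  assumes "crel m P" "length fs = m" "\<forall>f\<in>set fs. rf k f"
  shows "crel k (\<lambda>xs. P (map (\<lambda>f. f xs) fs))"
proof -
  obtain c where c: "rf m c" "\<forall>xs. length xs = m \<longrightarrow> (P xs \<longleftrightarrow> c xs = 0)"
    using assms(1) unfolding crel_def by auto
  show ?thesis
    by (rule crel_intro[OF rf_comp[OF c(1) assms(2,3)]]) (use c assms(2) in auto)
qed

lemma crel_lift1: "crel 1 (\<lambda>xs. R (xs ! 0)) \<Longrightarrow> rf k f \<Longrightarrow> crel k (\<lambda>xs. R (f xs))"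
  using crel_comp[of 1 "\<lambda>xs. R (xs ! 0)" "[f]" k] by simp

lemma crel_lift2: "crel 2 (\<lambda>xs. R (xs ! 0) (xs ! 1)) \<Longrightarrow> rf k f \<Longrightarrow> rf k g \<Longrightarrow> crel k (\<lambda>xs. R (f xs) (g xs))"
  using crel_comp[of 2 "\<lambda>xs. R (xs ! 0) (xs ! 1)" "[f, g]" k] by simp

lemma crel_lift3: "crel 3 (\<lambda>xs. R (xs ! 0) (xs ! 1) (xs ! 2)) \<Longrightarrow> rf k f \<Longrightarrow> rf k g \<Longrightarrow> rf k h
   \<Longrightarrow> crel k (\<lambda>xs. R (f xs) (g xs) (h xs))"
  using crel_comp[of 3 "\<lambda>xs. R (xs ! 0) (xs ! 1) (xs ! 2)" "[f, g, h]" k] by (simp add: numeral_3_eq_3)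

lemma crel_lift4: "crel 4 (\<lambda>xs. R (xs ! 0) (xs ! 1) (xs ! 2) (xs ! 3)) \<Longrightarrow> rf k f \<Longrightarrow> rf k g \<Longrightarrow> rf k h
   \<Longrightarrow> rf k i \<Longrightarrow> crel k (\<lambda>xs. R (f xs) (g xs) (h xs) (i xs))"
  using crel_comp[of 4 "\<lambda>xs. R (xs ! 0) (xs ! 1) (xs ! 2) (xs ! 3)" "[f, g, h, i]" k]
  by (simp add: numeral_eq_Suc)

lemma rec_nat_bex: "rec_nat (Suc 0) (\<lambda>i r. r * c i) m = 0 \<longleftrightarrow> (\<exists>i<m. c i = (0::nat))"
  by (induction m) (auto simp: less_Suc_eq)

lemma crel_bex:
  assumes "crel (Suc k) P" "rf k b"
  shows "crel k (\<lambda>xs. \<exists>i<b xs. P (i # xs))"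
proof -
  obtain c where c: "rf (Suc k) c" "\<forall>xs. length xs = Suc k \<longrightarrow> (P xs \<longleftrightarrow> c xs = 0)"
    using assms(1) unfolding crel_def by auto
  have h: "rf (k + 2) (\<lambda>ys. ys ! 1 * c (ys ! 0 # drop 2 ys))"
    by (intro rf_mult rf_proj rf_shift c(1)) auto
  have "rf (Suc k) (\<lambda>xs. rec_nat ((\<lambda>_. 1) (tl xs)) (\<lambda>i r. (\<lambda>ys. ys ! 1 * c (ys ! 0 # drop 2 ys)) (i # r # tl xs)) (hd xs))"
    by (rule rf_prim[OF rf_const h refl])
  then have "rf (Suc k) (\<lambda>xs. rec_nat 1 (\<lambda>i r. r * c (i # tl xs)) (hd xs))"
    by simp
  from rf_shift[OF this, of 0, simplified, OF assms(2)]
  have "rf k (\<lambda>xs. rec_nat 1 (\<lambda>i r. r * c (i # xs)) (b xs))" by simp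
  then show ?thesis
    by (rule crel_intro) (use c in \<open>simp add: rec_nat_bex\<close>)
qed

lemma crel_ball:
  assumes "crel (Suc k) P" "rf k b"
  shows "crel k (\<lambda>xs. \<forall>i<b xs. P (i # xs))"
proof -
  have "crel k (\<lambda>xs. \<not> (\<exists>i<b xs. \<not> P (i # xs)))"
    using crel_not[OF crel_bex[OF crel_not[OF assms(1)] assms(2)]] .
  then show ?thesis by simp
qed

lemma crel_bex':
  assumes "crel (Suc k) P" "rf k b" "\<And>xs. length xs = k \<Longrightarrow> Q xs \<longleftrightarrow> (\<exists>i<b xs. P (i # xs))"
  shows "crel k Q"
  using crel_cong[OF crel_bex[OF assms(1,2)]] assms(3) by blast

lemma crel_ball':
  assumes "crel (Suc k) P" "rf k b" "\<And>xs. length xs = k \<Longrightarrow> Q xs \<longleftrightarrow> (\<forall>i<b xs. P (i # xs))"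
  shows "crel k Q"
  using crel_cong[OF crel_ball[OF assms(1,2)]] assms(3) by blast

lemma crel_bexN: "crel m P \<Longrightarrow> m = Suc k \<Longrightarrow> rf k b \<Longrightarrow>
   (\<And>xs. length xs = k \<Longrightarrow> Q xs \<longleftrightarrow> (\<exists>i<b xs. P (i # xs))) \<Longrightarrow> crel k Q"
  by (rule crel_bex'[of k P b Q]) simp_all

lemma crel_ballN: "crel m P \<Longrightarrow> m = Suc k \<Longrightarrow> rf k b \<Longrightarrow>
   (\<And>xs. length xs = k \<Longrightarrow> Q xs \<longleftrightarrow> (\<forall>i<b xs. P (i # xs))) \<Longrightarrow> crel k Q"
  by (rule crel_ball'[of k P b Q]) simp_all

lemma rf_muN: "crel m P \<Longrightarrow> m = Suc k \<Longrightarrow> \<forall>xs. length xs = k \<longrightarrow> (\<exists>y. P (y # xs)) \<Longrightarrow>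
   (\<And>xs. length xs = k \<Longrightarrow> (LEAST y. P (y # xs)) = f xs) \<Longrightarrow> rf k f"
proof -
  assume a: "crel m P" "m = Suc k" "\<forall>xs. length xs = k \<longrightarrow> (\<exists>y. P (y # xs))"
    "\<And>xs. length xs = k \<Longrightarrow> (LEAST y. P (y # xs)) = f xs"
  have "rf k (\<lambda>xs. LEAST y. P (y # xs))" using rf_mu'[of k P] a(1-3) by simp
  then show "rf k f" by (rule rf_cong) (rule a(4))
qed

definition pe :: "nat \<Rightarrow> nat \<Rightarrow> nat" where "pe a b = prod_encode (a, b)"
definition pfst :: "nat \<Rightarrow> nat" where "pfst p = fst (prod_decode p)"
definition psnd :: "nat \<Rightarrow> nat" where "psnd p = snd (prod_decode p)"

lemma pfst_pe[simp]: "pfst (pe a b) = a" by (simp add: pfst_def pe_def)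
lemma psnd_pe[simp]: "psnd (pe a b) = b" by (simp add: psnd_def pe_def)
lemma pe_surj[simp]: "pe (pfst p) (psnd p) = p" by (simp add: pfst_def psnd_def pe_def)
lemma pe_eq[simp]: "pe a b = pe c d \<longleftrightarrow> a = c \<and> b = d" by (simp add: pe_def)

lemma triangle_ge: "n \<le> triangle n" by (induction n) auto

lemma pe_ge: "a + b \<le> pe a b"
  unfolding pe_def prod_encode_def using triangle_ge[of "a+b"] by simp

lemma pfst_le: "pfst p \<le> p" using pe_ge[of "pfst p" "psnd p"] by simp
lemma psnd_le: "psnd p \<le> p" using pe_ge[of "pfst p" "psnd p"] by simp

lemma rf_tri0: "rf 1 (\<lambda>xs. triangle (xs ! 0))"
proof -
  have "rf 1 (\<lambda>xs. rec_nat ((\<lambda>_. 0) (tl xs)) (\<lambda>k r. (\<lambda>ys. ys ! 1 + Suc (ys ! 0)) (k # r # tl xs)) (hd xs))"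
    by (rule rf_prim; (intro rf_zero rf_add rf_Suc rf_proj)?; simp?)
  then show ?thesis
  proof (rule rf_cong)
    fix xs :: "nat list" assume "length xs = 1"
    then obtain a where xs: "xs = [a]" using len1 by metis
    show "rec_nat 0 (\<lambda>k r. (k # r # tl xs) ! 1 + Suc ((k # r # tl xs) ! 0)) (hd xs) = triangle (xs ! 0)"
      unfolding xs by (induction a) auto
  qed
qed

lemma rf_pe0: "rf 2 (\<lambda>xs. pe (xs ! 0) (xs ! 1))"
proof -
  have "rf 2 (\<lambda>xs. triangle (xs ! 0 + xs ! 1) + xs ! 0)"
    by (intro rf_add rf_lift1[OF rf_tri0] rf_proj) auto
  then show ?thesis by (simp add: pe_def prod_encode_def)
qed

lemma rf_pe: "rf k f \<Longrightarrow> rf k g \<Longrightarrow> rf k (\<lambda>xs. pe (f xs) (g xs))"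
  by (rule rf_lift2[OF rf_pe0])

lemma least_pfst: "(LEAST y. \<exists>b<Suc p. pe y b = p) = pfst p"
proof (rule Least_equality)
  show "\<exists>b<Suc p. pe (pfst p) b = p"
    using psnd_le[of p] by (intro exI[of _ "psnd p"]) auto
  show "\<And>y. \<exists>b<Suc p. pe y b = p \<Longrightarrow> pfst p \<le> y" by auto
qed

lemma least_psnd: "(LEAST y. \<exists>b<Suc p. pe b y = p) = psnd p"
proof (rule Least_equality)
  show "\<exists>b<Suc p. pe b (psnd p) = p"
    using pfst_le[of p] by (intro exI[of _ "pfst p"]) auto
  show "\<And>y. \<exists>b<Suc p. pe b y = p \<Longrightarrow> psnd p \<le> y" by auto
qed

lemma rf_pfst0: "rf 1 (\<lambda>xs. pfst (xs ! 0))"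
proof -
  have c3: "crel 3 (\<lambda>zs. pe (zs ! 1) (zs ! 0) = zs ! 2)"
    by (intro crel_eq rf_pe rf_proj) auto
  have c: "crel 2 (\<lambda>ys. \<exists>b<Suc (ys ! 1). pe (ys ! 0) b = ys ! 1)"
    by (rule crel_bexN[OF c3, of 2 "\<lambda>xs. Suc (xs ! 1)"], simp, (intro rf_Suc rf_proj, simp), simp add: nth_Cons')
  show ?thesis
  proof (rule rf_muN[OF c, of 1], simp)
    show "\<forall>xs. length xs = 1 \<longrightarrow> (\<exists>y b. b < Suc ((y # xs) ! 1) \<and> pe ((y # xs) ! 0) b = (y # xs) ! 1)"
    proof (intro allI impI)
      fix xs :: "nat list"
      show "\<exists>y b. b < Suc ((y # xs) ! 1) \<and> pe ((y # xs) ! 0) b = (y # xs) ! 1"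
        using psnd_le[of "xs ! 0"] by (intro exI[of _ "pfst (xs!0)"] exI[of _ "psnd (xs!0)"]) simp
    qed
    show "(LEAST y. \<exists>b<Suc ((y # xs) ! 1). pe ((y # xs) ! 0) b = (y # xs) ! 1) = pfst (xs ! 0)" for xs
      using least_pfst[of "xs ! 0"] by simp
  qed
qed

lemma rf_psnd0: "rf 1 (\<lambda>xs. psnd (xs ! 0))"
proof -
  have c3: "crel 3 (\<lambda>zs. pe (zs ! 0) (zs ! 1) = zs ! 2)"
    by (intro crel_eq rf_pe rf_proj) auto
  have c: "crel 2 (\<lambda>ys. \<exists>b<Suc (ys ! 1). pe b (ys ! 0) = ys ! 1)"
    by (rule crel_bexN[OF c3, of 2 "\<lambda>xs. Suc (xs ! 1)"], simp, (intro rf_Suc rf_proj, simp), simp add: nth_Cons')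
  show ?thesis
  proof (rule rf_muN[OF c, of 1], simp)
    show "\<forall>xs. length xs = 1 \<longrightarrow> (\<exists>y b. b < Suc ((y # xs) ! 1) \<and> pe b ((y # xs) ! 0) = (y # xs) ! 1)"
    proof (intro allI impI)
      fix xs :: "nat list"
      show "\<exists>y b. b < Suc ((y # xs) ! 1) \<and> pe b ((y # xs) ! 0) = (y # xs) ! 1"
        using pfst_le[of "xs ! 0"] by (intro exI[of _ "psnd (xs!0)"] exI[of _ "pfst (xs!0)"]) simp
    qed
    show "(LEAST y. \<exists>b<Suc ((y # xs) ! 1). pe b ((y # xs) ! 0) = (y # xs) ! 1) = psnd (xs ! 0)" for xs
      using least_psnd[of "xs ! 0"] by simp
  qed
qed

lemma rf_pfst: "rf k f \<Longrightarrow> rf k (\<lambda>xs. pfst (f xs))" by (rule rf_lift1[OF rf_pfst0])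
lemma rf_psnd: "rf k f \<Longrightarrow> rf k (\<lambda>xs. psnd (f xs))" by (rule rf_lift1[OF rf_psnd0])

definition cons_c :: "nat \<Rightarrow> nat \<Rightarrow> nat" where "cons_c x c = Suc (pe x c)"
definition hd_c :: "nat \<Rightarrow> nat" where "hd_c c = pfst (c - 1)"
definition tl_c :: "nat \<Rightarrow> nat" where "tl_c c = psnd (c - 1)"
definition nth_c :: "nat \<Rightarrow> nat \<Rightarrow> nat" where "nth_c c i = hd_c ((tl_c ^^ i) c)"
definition len_c :: "nat \<Rightarrow> nat" where "len_c c = (LEAST i. (tl_c ^^ i) c = 0)"

lemma enc_Cons: "list_encode (x # xs) = cons_c x (list_encode xs)"
  by (simp add: cons_c_def pe_def)

lemma hd_c_cons[simp]: "hd_c (cons_c x c) = x" by (simp add: hd_c_def cons_c_def)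
lemma tl_c_cons[simp]: "tl_c (cons_c x c) = c" by (simp add: tl_c_def cons_c_def)
lemma cons_c_ne[simp]: "cons_c x c \<noteq> 0" by (simp add: cons_c_def)
lemma cons_c_eq[simp]: "cons_c x c = cons_c y d \<longleftrightarrow> x = y \<and> c = d" by (simp add: cons_c_def)

lemma tl_c_enc: "tl_c (list_encode xs) = list_encode (tl xs)"
proof (cases xs)
  case Nil
  then show ?thesis by (simp add: tl_c_def psnd_def prod_decode_def prod_decode_aux.simps)
next
  case (Cons a l)
  then show ?thesis by (simp del: list_encode.simps add: enc_Cons)
qed

lemma tls_enc: "(tl_c ^^ i) (list_encode xs) = list_encode (drop i xs)"
  by (induction i arbitrary: xs) (simp_all add: tl_c_enc drop_Suc funpow_swap1 drop_tl)

lemma nth_c_enc: "i < length xs \<Longrightarrow> nth_c (list_encode xs) i = xs ! i"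
  unfolding nth_c_def tls_enc by (simp del: list_encode.simps add: Cons_nth_drop_Suc[symmetric] enc_Cons)

lemma enc_eq0: "list_encode xs = 0 \<longleftrightarrow> xs = []"
  using list_encode_eq[of xs "[]"] by simp

lemma len_c_enc: "len_c (list_encode xs) = length xs"
  unfolding len_c_def tls_enc enc_eq0 by (rule Least_equality) auto

lemma rec_nat_funpow: "rec_nat c (\<lambda>k r. f r) i = (f ^^ i) c"
  by (induction i) auto

lemma rf_tl_c: "rf k f \<Longrightarrow> rf k (\<lambda>xs. tl_c (f xs))"
  unfolding tl_c_def by (intro rf_psnd rf_minus rf_const)

lemma rf_tls0: "rf 2 (\<lambda>xs. (tl_c ^^ (xs ! 0)) (xs ! 1))"
proof -
  have "rf 2 (\<lambda>xs. rec_nat ((\<lambda>ys. ys ! 0) (tl xs)) (\<lambda>k r. (\<lambda>ys. tl_c (ys ! 1)) (k # r # tl xs)) (hd xs))"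
    by (rule rf_prim; (intro rf_proj rf_tl_c)?; simp?)
  then show ?thesis
  proof (rule rf_cong)
    fix xs :: "nat list" assume "length xs = 2"
    then obtain a b where xs: "xs = [a, b]" using len2 by metis
    show "rec_nat (tl xs ! 0) (\<lambda>k r. tl_c ((k # r # tl xs) ! 1)) (hd xs) = (tl_c ^^ (xs ! 0)) (xs ! 1)"
      unfolding xs by (simp add: rec_nat_funpow)
  qed
qed

lemma rf_tls: "rf k f \<Longrightarrow> rf k g \<Longrightarrow> rf k (\<lambda>xs. (tl_c ^^ (f xs)) (g xs))"
  by (rule rf_lift2[OF rf_tls0])

lemma rf_hd_c: "rf k f \<Longrightarrow> rf k (\<lambda>xs. hd_c (f xs))"
  unfolding hd_c_def by (intro rf_pfst rf_minus rf_const)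

lemma rf_cons_c: "rf k f \<Longrightarrow> rf k g \<Longrightarrow> rf k (\<lambda>xs. cons_c (f xs) (g xs))"
  unfolding cons_c_def by (intro rf_Suc rf_pe)

lemma rf_nth_c: "rf k f \<Longrightarrow> rf k g \<Longrightarrow> rf k (\<lambda>xs. nth_c (f xs) (g xs))"
  unfolding nth_c_def by (intro rf_hd_c rf_tls)

lemma rf_len_c0: "rf 1 (\<lambda>xs. len_c (xs ! 0))"
proof -
  have c: "crel 2 (\<lambda>ys. (tl_c ^^ (ys ! 0)) (ys ! 1) = 0)"
    by (intro crel_eq rf_tls rf_proj rf_const) simp_all
  show ?thesis
  proof (rule rf_muN[OF c, of 1], simp)
    show "\<forall>xs. length xs = 1 \<longrightarrow> (\<exists>y. (tl_c ^^ ((y # xs) ! 0)) ((y # xs) ! 1) = 0)"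
    proof (intro allI impI)
      fix xs :: "nat list"
      have "(tl_c ^^ length (list_decode (xs ! 0))) (xs ! 0) = 0"
        using tls_enc[of "length (list_decode (xs ! 0))" "list_decode (xs ! 0)"] by simp
      then show "\<exists>y. (tl_c ^^ ((y # xs) ! 0)) ((y # xs) ! 1) = 0" by auto
    qed
    show "(LEAST y. (tl_c ^^ ((y # xs) ! 0)) ((y # xs) ! 1) = 0) = len_c (xs ! 0)" for xs
      by (simp add: len_c_def)
  qed
qed

lemma rf_len_c: "rf k f \<Longrightarrow> rf k (\<lambda>xs. len_c (f xs))"
  by (rule rf_lift1[OF rf_len_c0])

lemmas rf_intros = rf_proj rf_const rf_add rf_mult rf_minus rf_Suc rf_pe rf_pfst rf_psnd
  rf_cons_c rf_hd_c rf_tl_c rf_nth_c rf_len_c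

lemmas crel_intros = crel_eq crel_le crel_less crel_and crel_or crel_not crel_imp crel_const

lemma len_c_def2: "len_c c = length (list_decode c)"
  using len_c_enc[of "list_decode c"] by simp

lemma nth_c_def2: "i < len_c c \<Longrightarrow> nth_c c i = list_decode c ! i"
  using nth_c_enc[of i "list_decode c"] by (simp add: len_c_def2)

lemma list_elem_less: "x \<in> set xs \<Longrightarrow> x < list_encode xs"
proof (induction xs)
  case Nil then show ?case by simp
next
  case (Cons a xs)
  have "a \<le> pe a (list_encode xs)" "list_encode xs \<le> pe a (list_encode xs)"
    using pe_ge[of a "list_encode xs"] by auto
  with Cons show ?case by (auto simp del: list_encode.simps simp: enc_Cons cons_c_def)
qed

lemma nth_c_less: "i < len_c c \<Longrightarrow> nth_c c i < c"
  using list_elem_less[of "list_decode c ! i" "list_decode c"]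
  by (simp add: nth_c_def2 len_c_def2)

inductive evalc :: "nat \<Rightarrow> nat \<Rightarrow> nat \<Rightarrow> bool" where
  ez: "pfst e = 0 \<Longrightarrow> evalc e x 0"
| es: "pfst e = 1 \<Longrightarrow> evalc e x (Suc (hd_c x))"
| ep: "pfst e = 2 \<Longrightarrow> evalc e x (nth_c x (psnd e))"
| ec: "pfst e = 3 \<Longrightarrow> evalc (pfst (psnd e)) y v \<Longrightarrow> len_c y = len_c (psnd (psnd e)) \<Longrightarrow>
       \<forall>i<len_c (psnd (psnd e)). evalc (nth_c (psnd (psnd e)) i) x (nth_c y i) \<Longrightarrow> evalc e x v"
| er0: "pfst e = 4 \<Longrightarrow> x \<noteq> 0 \<Longrightarrow> hd_c x = 0 \<Longrightarrow> evalc (pfst (psnd e)) (tl_c x) v \<Longrightarrow> evalc e x v"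
| erS: "pfst e = 4 \<Longrightarrow> x \<noteq> 0 \<Longrightarrow> hd_c x \<noteq> 0 \<Longrightarrow> evalc e (cons_c (hd_c x - 1) (tl_c x)) r \<Longrightarrow>
       evalc (psnd (psnd e)) (cons_c (hd_c x - 1) (cons_c r (tl_c x))) v \<Longrightarrow> evalc e x v"
| em: "pfst e = 5 \<Longrightarrow> evalc (psnd e) (cons_c v x) 0 \<Longrightarrow>
       \<forall>z<v. \<exists>w. w \<noteq> 0 \<and> evalc (psnd e) (cons_c z x) w \<Longrightarrow> evalc e x v"

lemma evalc_inv:
  assumes "evalc e x v"
  shows "(pfst e = 0 \<and> v = 0) \<or> (pfst e = 1 \<and> v = Suc (hd_c x)) \<or> (pfst e = 2 \<and> v = nth_c x (psnd e)) \<or>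
    (pfst e = 3 \<and> (\<exists>y. evalc (pfst (psnd e)) y v \<and> len_c y = len_c (psnd (psnd e)) \<and>
       (\<forall>i<len_c (psnd (psnd e)). evalc (nth_c (psnd (psnd e)) i) x (nth_c y i)))) \<or>
    (pfst e = 4 \<and> x \<noteq> 0 \<and> ((hd_c x = 0 \<and> evalc (pfst (psnd e)) (tl_c x) v) \<or>
       (hd_c x \<noteq> 0 \<and> (\<exists>r. evalc e (cons_c (hd_c x - 1) (tl_c x)) r \<and>
           evalc (psnd (psnd e)) (cons_c (hd_c x - 1) (cons_c r (tl_c x))) v)))) \<or>
    (pfst e = 5 \<and> evalc (psnd e) (cons_c v x) 0 \<and> (\<forall>z<v. \<exists>w. w \<noteq> 0 \<and> evalc (psnd e) (cons_c z x) w))"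
  using assms by (cases rule: evalc.cases) auto

lemma hd_c_enc: "hd_c (list_encode (a # l)) = a"
  by (simp del: list_encode.simps add: enc_Cons)
lemma tl_c_enc': "tl_c (list_encode (a # l)) = list_encode l"
  by (simp del: list_encode.simps add: enc_Cons)

lemma decode_eq_map:
  assumes "len_c y = length gs" "\<forall>i<length gs. nth_c y i = (gs ! i) xs"
  shows "list_decode y = map (\<lambda>g. g xs) gs"
  using assms by (intro nth_equalityI) (auto simp: len_c_def2 nth_c_def2)

lemma recfn_code:
  assumes "recfn n g"
  shows "\<exists>e. \<forall>xs. length xs = n \<longrightarrow> (\<forall>v. evalc e (list_encode xs) v \<longleftrightarrow> v = g xs)"
  using assms
proof (induction rule: recfn.induct)
  case (zero n)
  have "\<forall>xs. length xs = n \<longrightarrow> (\<forall>v. evalc (pe 0 0) (list_encode xs) v \<longleftrightarrow> v = 0)"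
    by (auto dest: evalc_inv intro: evalc.ez)
  then show ?case by blast
next
  case succ
  have "\<forall>xs. length xs = 1 \<longrightarrow> (\<forall>v. evalc (pe 1 0) (list_encode xs) v \<longleftrightarrow> v = Suc (hd xs))"
  proof (rule allI, rule impI)
    fix xs :: "nat list" assume "length xs = 1"
    then obtain a where xs: "xs = [a]" using len1 by metis
    have "evalc (pe 1 0) (list_encode [a]) v \<longleftrightarrow> v = Suc a" for v
      using evalc.es[of "pe 1 0" "list_encode [a]"]
      by (auto dest: evalc_inv simp: hd_c_enc simp del: list_encode.simps)
    then show "\<forall>v. evalc (pe 1 0) (list_encode xs) v \<longleftrightarrow> v = Suc (hd xs)" by (simp add: xs)
  qed
  then show ?case by blast
next
  case (proj i n)
  have "\<forall>xs. length xs = n \<longrightarrow> (\<forall>v. evalc (pe 2 i) (list_encode xs) v \<longleftrightarrow> v = xs ! i)"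
  proof (rule allI, rule impI)
    fix xs :: "nat list" assume l: "length xs = n"
    show "\<forall>v. evalc (pe 2 i) (list_encode xs) v \<longleftrightarrow> v = xs ! i"
      using evalc.ep[of "pe 2 i" "list_encode xs"] proj l
      by (auto dest: evalc_inv simp: nth_c_enc)
  qed
  then show ?case by blast
next
  case (comp m f gs n)
  from comp.IH(1) obtain ef where ef: "\<forall>ys. length ys = m \<longrightarrow> (\<forall>v. evalc ef (list_encode ys) v \<longleftrightarrow> v = f ys)"
    by blast
  have ex: "\<exists>e. \<forall>xs. length xs = n \<longrightarrow> (\<forall>v. evalc e (list_encode xs) v \<longleftrightarrow> v = (gs ! i) xs)"
    if "i < length gs" for i
    by (rule conjunct2[OF bspec[OF comp.IH(2) nth_mem[OF that]]])
  define E where "E i = (SOME e. \<forall>xs. length xs = n \<longrightarrow> (\<forall>v. evalc e (list_encode xs) v \<longleftrightarrow> v = (gs ! i) xs))" for i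
  have E: "evalc (E i) (list_encode xs) v \<longleftrightarrow> v = (gs ! i) xs" if "i < length gs" "length xs = n" for i xs v
  proof -
    have "\<forall>xs. length xs = n \<longrightarrow> (\<forall>v. evalc (E i) (list_encode xs) v \<longleftrightarrow> v = (gs ! i) xs)"
      unfolding E_def by (rule someI_ex[OF ex[OF that(1)]])
    then show ?thesis using that(2) by blast
  qed
  define es where "es = map E [0..<length gs]"
  have les: "len_c (list_encode es) = length gs" by (simp add: es_def len_c_enc)
  have nes: "i < length gs \<Longrightarrow> nth_c (list_encode es) i = E i" for i by (simp add: es_def nth_c_enc)
  define e where "e = pe 3 (pe ef (list_encode es))"
  have e1: "pfst e = 3" "pfst (psnd e) = ef" "psnd (psnd e) = list_encode es" by (simp_all add: e_def)
  have "\<forall>xs. length xs = n \<longrightarrow> (\<forall>v. evalc e (list_encode xs) v \<longleftrightarrow> v = f (map (\<lambda>g. g xs) gs))"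
  proof (rule allI, rule impI, rule allI)
    fix xs :: "nat list" and v assume l: "length xs = n"
    show "evalc e (list_encode xs) v \<longleftrightarrow> v = f (map (\<lambda>g. g xs) gs)"
    proof
      assume "evalc e (list_encode xs) v"
      from evalc_inv[OF this] have "\<exists>y. evalc ef y v \<and> len_c y = length gs \<and>
         (\<forall>i<length gs. evalc (E i) (list_encode xs) (nth_c y i))"
        unfolding e1 les by (simp add: nes)
      then obtain y where y: "evalc ef y v" "len_c y = length gs"
         "\<forall>i<length gs. evalc (E i) (list_encode xs) (nth_c y i)" by blast
      have "\<forall>i<length gs. nth_c y i = (gs ! i) xs"
      proof (rule allI, rule impI)
        fix i assume i: "i < length gs"
        then have "evalc (E i) (list_encode xs) (nth_c y i)" using y(3) by simp
        then show "nth_c y i = (gs ! i) xs" using E[OF i l] by simp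
      qed
      then have "list_decode y = map (\<lambda>g. g xs) gs" by (rule decode_eq_map[OF y(2)])
      then have yy: "y = list_encode (map (\<lambda>g. g xs) gs)" using list_decode_inverse[of y] by simp
      have "length (map (\<lambda>g. g xs) gs) = m" using comp.hyps(2) by simp
      then have "evalc ef (list_encode (map (\<lambda>g. g xs) gs)) v" using y(1) yy by simp
      then show "v = f (map (\<lambda>g. g xs) gs)" using ef \<open>length (map (\<lambda>g. g xs) gs) = m\<close> by simp
    next
      assume v: "v = f (map (\<lambda>g. g xs) gs)"
      let ?y = "list_encode (map (\<lambda>g. g xs) gs)"
      have lm: "length (map (\<lambda>g. g xs) gs) = m" using comp.hyps(2) by simp
      show "evalc e (list_encode xs) v"
      proof (rule evalc.ec)
        show "pfst e = 3" by (rule e1)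
        show "evalc (pfst (psnd e)) ?y v" unfolding e1 using ef lm v by blast
        show "len_c ?y = len_c (psnd (psnd e))" unfolding e1 les by (simp add: len_c_enc)
        show "\<forall>i<len_c (psnd (psnd e)). evalc (nth_c (psnd (psnd e)) i) (list_encode xs) (nth_c ?y i)"
          unfolding e1 les using E l by (simp add: nes nth_c_enc)
      qed
    qed
  qed
  then show ?case by blast
next
  case (prim n g h)
  from prim.IH(1) obtain eg where eg: "\<forall>ys. length ys = n \<longrightarrow> (\<forall>v. evalc eg (list_encode ys) v \<longleftrightarrow> v = g ys)"
    by auto
  from prim.IH(2) obtain eh where eh: "\<forall>ys. length ys = n + 2 \<longrightarrow> (\<forall>v. evalc eh (list_encode ys) v \<longleftrightarrow> v = h ys)"
    by auto
  define e where "e = pe 4 (pe eg eh)"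
  have e1: "pfst e = 4" "pfst (psnd e) = eg" "psnd (psnd e) = eh" by (simp_all add: e_def)
  have main: "\<forall>v. evalc e (list_encode (k # ys)) v \<longleftrightarrow> v = rec_nat (g ys) (\<lambda>k r. h (k # r # ys)) k"
    if l: "length ys = n" for k ys
  proof (induction k)
    case 0
    show ?case
    proof (intro allI iffI)
      fix v assume "evalc e (list_encode (0 # ys)) v"
      from evalc_inv[OF this] have "evalc eg (list_encode ys) v"
        unfolding e1 by (simp del: list_encode.simps add: enc_Cons)
      then show "v = rec_nat (g ys) (\<lambda>k r. h (k # r # ys)) 0" using eg l by simp
    next
      fix v assume "v = rec_nat (g ys) (\<lambda>k r. h (k # r # ys)) 0"
      then have ev: "evalc eg (list_encode ys) v" using eg l by simp
      show "evalc e (list_encode (0 # ys)) v"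
        by (rule evalc.er0) (simp_all del: list_encode.simps add: enc_Cons e1 ev)
    qed
  next
    case (Suc k)
    let ?R = "rec_nat (g ys) (\<lambda>k r. h (k # r # ys))"
    have encs: "cons_c k (cons_c r (list_encode ys)) = list_encode (k # r # ys)" for r
      by (simp del: list_encode.simps add: enc_Cons)
    show ?case
    proof (intro allI iffI)
      fix v assume "evalc e (list_encode (Suc k # ys)) v"
      from evalc_inv[OF this] have "\<exists>r. evalc e (cons_c k (list_encode ys)) r \<and>
         evalc eh (cons_c k (cons_c r (list_encode ys))) v"
        unfolding e1 by (simp del: list_encode.simps add: enc_Cons)
      then obtain r where r: "evalc e (cons_c k (list_encode ys)) r"
         "evalc eh (cons_c k (cons_c r (list_encode ys))) v" by blast
      have "r = ?R k" using Suc r(1) by (simp del: list_encode.simps add: enc_Cons)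
      then show "v = ?R (Suc k)" using r(2) eh l encs by (simp del: list_encode.simps)
    next
      fix v assume v: "v = ?R (Suc k)"
      have r: "evalc e (cons_c k (list_encode ys)) (?R k)" using Suc by (simp del: list_encode.simps add: enc_Cons)
      have ev: "evalc eh (cons_c k (cons_c (?R k) (list_encode ys))) v" using v eh l encs by (simp del: list_encode.simps)
      show "evalc e (list_encode (Suc k # ys)) v"
        by (rule evalc.erS[of _ _ "?R k"]) (simp_all del: list_encode.simps add: enc_Cons e1 ev r)
    qed
  qed
  show ?case
  proof (rule exI[of _ e], rule allI, rule impI)
    fix xs :: "nat list" assume "length xs = Suc n"
    then obtain k ys where xs: "xs = k # ys" "length ys = n" by (cases xs) auto
    show "\<forall>v. evalc e (list_encode xs) v \<longleftrightarrow> v = rec_nat (g (tl xs)) (\<lambda>k r. h (k # r # tl xs)) (hd xs)"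
      using main[OF xs(2)] xs(1) by simp
  qed
next
  case (mu n g)
  from mu.IH obtain eg where eg: "\<forall>ys. length ys = Suc n \<longrightarrow> (\<forall>v. evalc eg (list_encode ys) v \<longleftrightarrow> v = g ys)"
    by blast
  define e where "e = pe 5 eg"
  have encs: "cons_c y (list_encode xs) = list_encode (y # xs)" for y xs
    by (simp del: list_encode.simps add: enc_Cons)
  show ?case
  proof (rule exI[of _ e], rule allI, rule impI)
    fix xs :: "nat list" assume l: "length xs = n"
    have ev: "evalc eg (cons_c y (list_encode xs)) w \<longleftrightarrow> w = g (y # xs)" for y w
      using eg l encs by (simp del: list_encode.simps)
    show "\<forall>v. evalc e (list_encode xs) v \<longleftrightarrow> v = (LEAST y. g (y # xs) = 0)"
    proof (intro allI iffI)
      fix v assume "evalc e (list_encode xs) v"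
      from evalc_inv[OF this] have a: "evalc eg (cons_c v (list_encode xs)) 0"
         "\<forall>z<v. \<exists>w. w \<noteq> 0 \<and> evalc eg (cons_c z (list_encode xs)) w"
        by (simp_all add: e_def)
      have g0: "g (v # xs) = 0" using a(1) ev by simp
      have gz: "g (z # xs) \<noteq> 0" if "z < v" for z
      proof -
        have "\<exists>w. w \<noteq> 0 \<and> evalc eg (cons_c z (list_encode xs)) w" using a(2) that by simp
        then have "\<exists>w. w \<noteq> 0 \<and> w = g (z # xs)" unfolding ev .
        then show ?thesis by simp
      qed
      show "v = (LEAST y. g (y # xs) = 0)"
      proof (rule Least_equality[symmetric])
        show "g (v # xs) = 0" by (rule g0)
        fix y assume y: "g (y # xs) = 0"
        show "v \<le> y"
        proof (rule ccontr)
          assume "\<not> v \<le> y"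
          then have "y < v" by simp
          then show False using gz y by blast
        qed
      qed
    next
      fix v assume v: "v = (LEAST y. g (y # xs) = 0)"
      obtain y0 where "g (y0 # xs) = 0" using mu.hyps(2) l by blast
      then have g0: "g (v # xs) = 0" unfolding v by (rule LeastI)
      have gz: "z < v \<Longrightarrow> g (z # xs) \<noteq> 0" for z unfolding v by (rule not_less_Least)
      show "evalc e (list_encode xs) v"
      proof (rule evalc.em)
        show "pfst e = 5" by (simp add: e_def)
        show "evalc (psnd e) (cons_c v (list_encode xs)) 0" using ev g0 by (simp add: e_def)
        show "\<forall>z<v. \<exists>w. w \<noteq> 0 \<and> evalc (psnd e) (cons_c z (list_encode xs)) w"
        proof (rule allI, rule impI)
          fix z assume z: "z < v"
          show "\<exists>w. w \<noteq> 0 \<and> evalc (psnd e) (cons_c z (list_encode xs)) w"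
            using gz[OF z] ev[of z "g (z # xs)"] by (intro exI[of _ "g (z # xs)"]) (simp add: e_def)
        qed
      qed
    qed
  qed
qed

definition trip :: "nat \<Rightarrow> nat \<Rightarrow> nat \<Rightarrow> nat" where "trip e x v = pe e (pe x v)"
definition snd3 :: "nat \<Rightarrow> nat" where "snd3 t = pfst (psnd t)"
definition thd3 :: "nat \<Rightarrow> nat" where "thd3 t = psnd (psnd t)"

lemma trip_simps[simp]: "pfst (trip e x v) = e" "snd3 (trip e x v) = x" "thd3 (trip e x v) = v"
  by (simp_all add: trip_def snd3_def thd3_def)
lemma trip_surj[simp]: "trip (pfst t) (snd3 t) (thd3 t) = t"
  by (simp add: trip_def snd3_def thd3_def)
lemma trip_eq[simp]: "trip a b c = trip a' b' c' \<longleftrightarrow> a = a' \<and> b = b' \<and> c = c'"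
  by (simp add: trip_def)

lemma rf_trip: "rf k f \<Longrightarrow> rf k g \<Longrightarrow> rf k h \<Longrightarrow> rf k (\<lambda>xs. trip (f xs) (g xs) (h xs))"
  unfolding trip_def by (intro rf_pe)
lemma rf_snd3: "rf k f \<Longrightarrow> rf k (\<lambda>xs. snd3 (f xs))"
  unfolding snd3_def by (intro rf_pfst rf_psnd)
lemma rf_thd3: "rf k f \<Longrightarrow> rf k (\<lambda>xs. thd3 (f xs))"
  unfolding thd3_def by (intro rf_psnd)

definition justS :: "nat \<Rightarrow> nat \<Rightarrow> nat \<Rightarrow> nat set \<Rightarrow> bool" where
  "justS e x v S \<longleftrightarrow>
    (pfst e = 0 \<and> v = 0) \<or> (pfst e = 1 \<and> v = Suc (hd_c x)) \<or> (pfst e = 2 \<and> v = nth_c x (psnd e)) \<or>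
    (pfst e = 3 \<and> (\<exists>t\<in>S. pfst t = pfst (psnd e) \<and> thd3 t = v \<and> len_c (snd3 t) = len_c (psnd (psnd e)) \<and>
        (\<forall>i<len_c (psnd (psnd e)). trip (nth_c (psnd (psnd e)) i) x (nth_c (snd3 t) i) \<in> S))) \<or>
    (pfst e = 4 \<and> x \<noteq> 0 \<and> ((hd_c x = 0 \<and> trip (pfst (psnd e)) (tl_c x) v \<in> S) \<or>
       (hd_c x \<noteq> 0 \<and> (\<exists>t\<in>S. pfst t = e \<and> snd3 t = cons_c (hd_c x - 1) (tl_c x) \<and>
           trip (psnd (psnd e)) (cons_c (hd_c x - 1) (cons_c (thd3 t) (tl_c x))) v \<in> S)))) \<or>
    (pfst e = 5 \<and> trip (psnd e) (cons_c v x) 0 \<in> S \<and>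
       (\<forall>z<v. \<exists>t\<in>S. pfst t = psnd e \<and> snd3 t = cons_c z x \<and> thd3 t \<noteq> 0))"

definition closedS :: "nat set \<Rightarrow> bool" where
  "closedS S \<longleftrightarrow> (\<forall>t\<in>S. justS (pfst t) (snd3 t) (thd3 t) S)"

lemma justS_mono: "justS e x v S \<Longrightarrow> S \<subseteq> S' \<Longrightarrow> justS e x v S'"
  unfolding justS_def by blast

lemma closed_Union: "(\<And>A. A \<in> F \<Longrightarrow> closedS A) \<Longrightarrow> closedS (\<Union>F)"
  unfolding closedS_def
proof
  fix t assume h: "\<And>A. A \<in> F \<Longrightarrow> \<forall>t\<in>A. justS (pfst t) (snd3 t) (thd3 t) A" and t: "t \<in> \<Union>F"
  then obtain A where A: "A \<in> F" "t \<in> A" by blast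
  then have "justS (pfst t) (snd3 t) (thd3 t) A" using h by blast
  then show "justS (pfst t) (snd3 t) (thd3 t) (\<Union>F)" by (rule justS_mono) (use A in blast)
qed

lemma closed_insert: "closedS A \<Longrightarrow> justS e x v (insert (trip e x v) A) \<Longrightarrow> closedS (insert (trip e x v) A)"
  unfolding closedS_def
proof
  fix t assume h: "\<forall>t\<in>A. justS (pfst t) (snd3 t) (thd3 t) A" "justS e x v (insert (trip e x v) A)"
    and t: "t \<in> insert (trip e x v) A"
  show "justS (pfst t) (snd3 t) (thd3 t) (insert (trip e x v) A)"
  proof (cases "t = trip e x v")
    case True
    then show ?thesis using h(2) by simp
  next
    case False
    then have "t \<in> A" using t by blast
    then show ?thesis using h(1) justS_mono by blast
  qed
qed

definition certS :: "nat \<Rightarrow> nat \<Rightarrow> nat \<Rightarrow> nat set \<Rightarrow> bool" where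
  "certS e x v S \<longleftrightarrow> finite S \<and> closedS S \<and> trip e x v \<in> S"

lemma cert_complete:
  assumes "evalc e x v"
  shows "\<exists>S. certS e x v S"
  using assms
proof (induction rule: evalc.induct)
  case (ez e x)
  have "closedS {}" by (simp add: closedS_def)
  then have "closedS (insert (trip e x 0) {})"
    by (rule closed_insert) (simp add: justS_def ez)
  then show ?case unfolding certS_def by (intro exI[of _ "insert (trip e x 0) {}"]) simp
next
  case (es e x)
  have "closedS {}" by (simp add: closedS_def)
  then have "closedS (insert (trip e x (Suc (hd_c x))) {})"
    by (rule closed_insert) (simp add: justS_def es)
  then show ?case unfolding certS_def by (intro exI[of _ "insert (trip e x (Suc (hd_c x))) {}"]) simp
next
  case (ep e x)
  have "closedS {}" by (simp add: closedS_def)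
  then have "closedS (insert (trip e x (nth_c x (psnd e))) {})"
    by (rule closed_insert) (simp add: justS_def ep)
  then show ?case unfolding certS_def by (intro exI[of _ "insert (trip e x (nth_c x (psnd e))) {}"]) simp
next
  case (ec e y v x)
  let ?m = "len_c (psnd (psnd e))"
  let ?g = "\<lambda>i. nth_c (psnd (psnd e)) i"
  obtain Sf where Sf: "certS (pfst (psnd e)) y v Sf" using ec.IH(1) by blast
  have ex: "\<exists>S. certS (?g i) x (nth_c y i) S" if "i < ?m" for i
    using ec.IH(2) that by blast
  define SS where "SS i = (SOME S. certS (?g i) x (nth_c y i) S)" for i
  have SS: "certS (?g i) x (nth_c y i) (SS i)" if "i < ?m" for i
    unfolding SS_def by (rule someI_ex[OF ex[OF that]])
  define A where "A = \<Union>(insert Sf (SS ` {..<?m}))"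
  have finA: "finite A" using Sf SS by (auto simp: A_def certS_def)
  have clA: "closedS A"
    unfolding A_def by (rule closed_Union) (use Sf SS in \<open>auto simp: certS_def\<close>)
  have memA: "trip (pfst (psnd e)) y v \<in> A" "\<forall>i<?m. trip (?g i) x (nth_c y i) \<in> A"
    using Sf SS by (auto simp: A_def certS_def)
  have "justS e x v (insert (trip e x v) A)"
    unfolding justS_def using ec.hyps(1,3) memA
    by (intro disjI2 disjI2 disjI2 disjI1 conjI bexI[of _ "trip (pfst (psnd e)) y v"]) auto
  then have "closedS (insert (trip e x v) A)" by (rule closed_insert[OF clA])
  then show ?case unfolding certS_def using finA by (intro exI[of _ "insert (trip e x v) A"]) simp
next
  case (er0 e x v)
  obtain S where S: "certS (pfst (psnd e)) (tl_c x) v S" using er0.IH by blast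
  have "justS e x v (insert (trip e x v) S)"
    unfolding justS_def using er0.hyps S by (auto simp: certS_def)
  moreover have cl: "closedS S" using S by (simp add: certS_def)
  ultimately have "closedS (insert (trip e x v) S)" using closed_insert by blast
  then show ?case using S unfolding certS_def by (intro exI[of _ "insert (trip e x v) S"]) simp
next
  case (erS e x r v)
  obtain S1 where S1: "certS e (cons_c (hd_c x - 1) (tl_c x)) r S1" using erS.IH(1) by blast
  obtain S2 where S2: "certS (psnd (psnd e)) (cons_c (hd_c x - 1) (cons_c r (tl_c x))) v S2" using erS.IH(2) by blast
  define A where "A = S1 \<union> S2"
  have clA: "closedS A" unfolding A_def using closed_Union[of "{S1, S2}"] S1 S2 by (auto simp: certS_def)
  have "justS e x v (insert (trip e x v) A)"
    unfolding justS_def using erS.hyps(1-3) S1 S2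
    by (intro disjI2 disjI2 disjI2 disjI2 disjI1 conjI disjI2 bexI[of _ "trip e (cons_c (hd_c x - 1) (tl_c x)) r"])
       (auto simp: certS_def A_def)
  then have "closedS (insert (trip e x v) A)" by (rule closed_insert[OF clA])
  then show ?case using S1 S2 unfolding certS_def A_def by (intro exI[of _ "insert (trip e x v) (S1 \<union> S2)"]) simp
next
  case (em e v x)
  obtain S0 where S0: "certS (psnd e) (cons_c v x) 0 S0" using em.IH(1) by blast
  have ex: "\<exists>wS. fst wS \<noteq> 0 \<and> certS (psnd e) (cons_c z x) (fst wS) (snd wS)" if "z < v" for z
  proof -
    have "\<exists>w. w \<noteq> 0 \<and> evalc (psnd e) (cons_c z x) w \<and> (\<exists>S. certS (psnd e) (cons_c z x) w S)"
      using em.IH(2) that by simp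
    then obtain w S where w: "w \<noteq> 0" "certS (psnd e) (cons_c z x) w S" by (elim exE conjE)
    then show ?thesis by (intro exI[of _ "(w, S)"]) simp
  qed
  define WS where "WS z = (SOME wS. fst wS \<noteq> 0 \<and> certS (psnd e) (cons_c z x) (fst wS) (snd wS))" for z
  have WS: "fst (WS z) \<noteq> 0 \<and> certS (psnd e) (cons_c z x) (fst (WS z)) (snd (WS z))" if "z < v" for z
    unfolding WS_def by (rule someI_ex[OF ex[OF that]])
  define A where "A = \<Union>(insert S0 ((\<lambda>z. snd (WS z)) ` {..<v}))"
  have finA: "finite A" using S0 WS by (auto simp: A_def certS_def)
  have clA: "closedS A"
    unfolding A_def by (rule closed_Union) (use S0 WS in \<open>auto simp: certS_def\<close>)
  have mem0: "trip (psnd e) (cons_c v x) 0 \<in> A" using S0 by (auto simp: A_def certS_def)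
  have memz: "\<forall>z<v. \<exists>t\<in>insert (trip e x v) A. pfst t = psnd e \<and> snd3 t = cons_c z x \<and> thd3 t \<noteq> 0"
  proof (rule allI, rule impI)
    fix z assume z: "z < v"
    have "trip (psnd e) (cons_c z x) (fst (WS z)) \<in> A" using WS[OF z] z by (auto simp: A_def certS_def)
    then show "\<exists>t\<in>insert (trip e x v) A. pfst t = psnd e \<and> snd3 t = cons_c z x \<and> thd3 t \<noteq> 0"
      using WS[OF z] by (intro bexI[of _ "trip (psnd e) (cons_c z x) (fst (WS z))"]) auto
  qed
  have "justS e x v (insert (trip e x v) A)"
    unfolding justS_def using em.hyps(1) mem0 memz by simp
  then have "closedS (insert (trip e x v) A)" by (rule closed_insert[OF clA])
  then show ?case unfolding certS_def using finA by (intro exI[of _ "insert (trip e x v) A"]) simp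
qed

lemma psnd_less: "pfst p \<noteq> 0 \<Longrightarrow> psnd p < p"
  using pe_ge[of "pfst p" "psnd p"] by simp

lemma cert_sound:
  assumes cl: "closedS S"
  shows "trip e x v \<in> S \<Longrightarrow> evalc e x v"
proof (induction e arbitrary: x v rule: less_induct)
  case (less e)
  note IHe = less.IH
  have jS: "justS e x v S" if "trip e x v \<in> S" for x v
  proof -
    have "justS (pfst (trip e x v)) (snd3 (trip e x v)) (thd3 (trip e x v)) S"
      using cl that unfolding closedS_def by blast
    then show ?thesis by simp
  qed
  have IHt: "evalc (pfst t) (snd3 t) (thd3 t)" if "t \<in> S" "pfst t < e" for t
    using IHe[of "pfst t" "snd3 t" "thd3 t"] that by simp
  have main: "\<forall>x v. hd_c x = k \<longrightarrow> trip e x v \<in> S \<longrightarrow> evalc e x v" for k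
  proof (induction k rule: less_induct)
    case (less k)
    show ?case
    proof (intro allI impI)
      fix x v assume hk: "hd_c x = k" and t: "trip e x v \<in> S"
      from jS[OF t] show "evalc e x v" unfolding justS_def
      proof (elim disjE conjE)
        assume "pfst e = 0" "v = 0" then show ?thesis by (simp add: evalc.ez)
      next
        assume "pfst e = 1" "v = Suc (hd_c x)" then show ?thesis by (simp add: evalc.es)
      next
        assume "pfst e = 2" "v = nth_c x (psnd e)" then show ?thesis by (simp add: evalc.ep)
      next
        assume e3: "pfst e = 3" and "\<exists>t\<in>S. pfst t = pfst (psnd e) \<and> thd3 t = v \<and> len_c (snd3 t) = len_c (psnd (psnd e)) \<and>
          (\<forall>i<len_c (psnd (psnd e)). trip (nth_c (psnd (psnd e)) i) x (nth_c (snd3 t) i) \<in> S)"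
        then obtain t where t: "t \<in> S" "pfst t = pfst (psnd e)" "thd3 t = v" "len_c (snd3 t) = len_c (psnd (psnd e))"
          "\<forall>i<len_c (psnd (psnd e)). trip (nth_c (psnd (psnd e)) i) x (nth_c (snd3 t) i) \<in> S" by blast
        have lt: "psnd e < e" using e3 psnd_less by simp
        have "pfst (psnd e) < e" using lt pfst_le[of "psnd e"] by simp
        then have ev1: "evalc (pfst (psnd e)) (snd3 t) v" using IHt[OF t(1)] t(2,3) by simp
        have ev2: "\<forall>i<len_c (psnd (psnd e)). evalc (nth_c (psnd (psnd e)) i) x (nth_c (snd3 t) i)"
        proof (rule allI, rule impI)
          fix i assume i: "i < len_c (psnd (psnd e))"
          have "nth_c (psnd (psnd e)) i < e"
            using nth_c_less[OF i] psnd_le[of "psnd e"] lt by simp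
          then show "evalc (nth_c (psnd (psnd e)) i) x (nth_c (snd3 t) i)"
            using IHe t(5) i by blast
        qed
        show ?thesis by (rule evalc.ec[OF e3 ev1 t(4) ev2])
      next
        assume e4: "pfst e = 4" "x \<noteq> 0" "hd_c x = 0" "trip (pfst (psnd e)) (tl_c x) v \<in> S"
        have "pfst (psnd e) < e" using e4(1) psnd_less[of e] pfst_le[of "psnd e"] by simp
        then have "evalc (pfst (psnd e)) (tl_c x) v" using IHe e4(4) by blast
        then show ?thesis by (rule evalc.er0[OF e4(1-3)])
      next
        assume e4: "pfst e = 4" "x \<noteq> 0" "hd_c x \<noteq> 0" and "\<exists>t\<in>S. pfst t = e \<and> snd3 t = cons_c (hd_c x - 1) (tl_c x) \<and>
           trip (psnd (psnd e)) (cons_c (hd_c x - 1) (cons_c (thd3 t) (tl_c x))) v \<in> S"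
        then obtain t where t: "t \<in> S" "pfst t = e" "snd3 t = cons_c (hd_c x - 1) (tl_c x)"
          "trip (psnd (psnd e)) (cons_c (hd_c x - 1) (cons_c (thd3 t) (tl_c x))) v \<in> S" by blast
        have tt: "trip e (cons_c (hd_c x - 1) (tl_c x)) (thd3 t) \<in> S"
          using t(1-3) trip_surj[of t] by simp
        have "hd_c x - 1 < k" using hk e4(3) by simp
        then have ev1: "evalc e (cons_c (hd_c x - 1) (tl_c x)) (thd3 t)"
          using less.IH tt by simp
        have "psnd (psnd e) < e" using e4(1) psnd_less[of e] psnd_le[of "psnd e"] by simp
        then have ev2: "evalc (psnd (psnd e)) (cons_c (hd_c x - 1) (cons_c (thd3 t) (tl_c x))) v"
          using IHe t(4) by blast
        show ?thesis by (rule evalc.erS[OF e4 ev1 ev2])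
      next
        assume e5: "pfst e = 5" "trip (psnd e) (cons_c v x) 0 \<in> S"
          "\<forall>z<v. \<exists>t\<in>S. pfst t = psnd e \<and> snd3 t = cons_c z x \<and> thd3 t \<noteq> 0"
        have lt: "psnd e < e" using e5(1) psnd_less by simp
        have ev1: "evalc (psnd e) (cons_c v x) 0" using IHe lt e5(2) by blast
        have ev2: "\<forall>z<v. \<exists>w. w \<noteq> 0 \<and> evalc (psnd e) (cons_c z x) w"
        proof (rule allI, rule impI)
          fix z assume z: "z < v"
          then obtain t where t: "t \<in> S" "pfst t = psnd e" "snd3 t = cons_c z x" "thd3 t \<noteq> 0"
            using e5(3) by blast
          have "evalc (pfst t) (snd3 t) (thd3 t)" using IHt[OF t(1)] t(2) lt by simp
          then show "\<exists>w. w \<noteq> 0 \<and> evalc (psnd e) (cons_c z x) w" using t by auto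
        qed
        show ?thesis by (rule evalc.em[OF e5(1) ev1 ev2])
      qed
    qed
  qed
  show ?case using main less.prems by blast
qed

lemma evalc_cert: "evalc e x v \<longleftrightarrow> (\<exists>S. certS e x v S)"
  using cert_complete cert_sound unfolding certS_def by blast

definition memc :: "nat \<Rightarrow> nat \<Rightarrow> bool" where
  "memc t L \<longleftrightarrow> (\<exists>j<len_c L. nth_c L j = t)"
definition B3 :: "nat \<Rightarrow> nat \<Rightarrow> nat \<Rightarrow> nat \<Rightarrow> bool" where
  "B3 g x y L \<longleftrightarrow> (\<forall>i<len_c g. memc (trip (nth_c g i) x (nth_c y i)) L)"
definition A3 :: "nat \<Rightarrow> nat \<Rightarrow> nat \<Rightarrow> nat \<Rightarrow> bool" where
  "A3 e x v L \<longleftrightarrow> (\<exists>j<len_c L. pfst (nth_c L j) = pfst (psnd e) \<and> thd3 (nth_c L j) = v \<and>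
     len_c (snd3 (nth_c L j)) = len_c (psnd (psnd e)) \<and> B3 (psnd (psnd e)) x (snd3 (nth_c L j)) L)"
definition A4 :: "nat \<Rightarrow> nat \<Rightarrow> nat \<Rightarrow> nat \<Rightarrow> bool" where
  "A4 e x v L \<longleftrightarrow> (\<exists>j<len_c L. pfst (nth_c L j) = e \<and> snd3 (nth_c L j) = cons_c (hd_c x - 1) (tl_c x) \<and>
     memc (trip (psnd (psnd e)) (cons_c (hd_c x - 1) (cons_c (thd3 (nth_c L j)) (tl_c x))) v) L)"
definition A5a :: "nat \<Rightarrow> nat \<Rightarrow> nat \<Rightarrow> nat \<Rightarrow> bool" where
  "A5a e x z L \<longleftrightarrow> (\<exists>j<len_c L. pfst (nth_c L j) = psnd e \<and> snd3 (nth_c L j) = cons_c z x \<and> thd3 (nth_c L j) \<noteq> 0)"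
definition A5 :: "nat \<Rightarrow> nat \<Rightarrow> nat \<Rightarrow> nat \<Rightarrow> bool" where
  "A5 e x v L \<longleftrightarrow> (\<forall>z<v. A5a e x z L)"
definition justc :: "nat \<Rightarrow> nat \<Rightarrow> nat \<Rightarrow> nat \<Rightarrow> bool" where
  "justc e x v L \<longleftrightarrow>
    (pfst e = 0 \<and> v = 0) \<or> (pfst e = 1 \<and> v = Suc (hd_c x)) \<or> (pfst e = 2 \<and> v = nth_c x (psnd e)) \<or>
    (pfst e = 3 \<and> A3 e x v L) \<or>
    (pfst e = 4 \<and> x \<noteq> 0 \<and> ((hd_c x = 0 \<and> memc (trip (pfst (psnd e)) (tl_c x) v) L) \<or> (hd_c x \<noteq> 0 \<and> A4 e x v L))) \<or>
    (pfst e = 5 \<and> memc (trip (psnd e) (cons_c v x) 0) L \<and> A5 e x v L)"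
definition validc :: "nat \<Rightarrow> bool" where
  "validc L \<longleftrightarrow> (\<forall>j<len_c L. justc (pfst (nth_c L j)) (snd3 (nth_c L j)) (thd3 (nth_c L j)) L)"

lemma ex_enc: "(\<exists>j<len_c (list_encode Ls). P (nth_c (list_encode Ls) j)) \<longleftrightarrow> (\<exists>t\<in>set Ls. P t)"
proof
  assume "\<exists>j<len_c (list_encode Ls). P (nth_c (list_encode Ls) j)"
  then obtain j where j: "j < length Ls" "P (nth_c (list_encode Ls) j)" by (auto simp: len_c_enc)
  then have "P (Ls ! j)" by (simp add: nth_c_enc)
  then show "\<exists>t\<in>set Ls. P t" using j(1) nth_mem by blast
next
  assume "\<exists>t\<in>set Ls. P t"
  then obtain j where j: "j < length Ls" "P (Ls ! j)" by (auto simp: in_set_conv_nth)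
  then have "P (nth_c (list_encode Ls) j)" by (simp add: nth_c_enc)
  then show "\<exists>j<len_c (list_encode Ls). P (nth_c (list_encode Ls) j)" using j(1) by (auto simp: len_c_enc)
qed
lemma all_enc: "(\<forall>j<len_c (list_encode Ls). P (nth_c (list_encode Ls) j)) \<longleftrightarrow> (\<forall>t\<in>set Ls. P t)"
  using ex_enc[of Ls "\<lambda>t. \<not> P t"] by blast
lemma memc_enc: "memc t (list_encode Ls) \<longleftrightarrow> t \<in> set Ls"
  unfolding memc_def using ex_enc[of Ls "\<lambda>u. u = t"] by simp

lemma A3_enc: "A3 e x v (list_encode Ls) \<longleftrightarrow> (\<exists>t\<in>set Ls. pfst t = pfst (psnd e) \<and> thd3 t = v \<and> len_c (snd3 t) = len_c (psnd (psnd e)) \<and>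
        (\<forall>i<len_c (psnd (psnd e)). trip (nth_c (psnd (psnd e)) i) x (nth_c (snd3 t) i) \<in> set Ls))"
  unfolding A3_def B3_def memc_enc by (subst ex_enc[symmetric]) (rule refl)
lemma A4_enc: "A4 e x v (list_encode Ls) \<longleftrightarrow> (\<exists>t\<in>set Ls. pfst t = e \<and> snd3 t = cons_c (hd_c x - 1) (tl_c x) \<and>
           trip (psnd (psnd e)) (cons_c (hd_c x - 1) (cons_c (thd3 t) (tl_c x))) v \<in> set Ls)"
  unfolding A4_def memc_enc by (subst ex_enc[symmetric]) (rule refl)
lemma A5a_enc: "A5a e x z (list_encode Ls) \<longleftrightarrow> (\<exists>t\<in>set Ls. pfst t = psnd e \<and> snd3 t = cons_c z x \<and> thd3 t \<noteq> 0)"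
  unfolding A5a_def by (subst ex_enc[symmetric]) (rule refl)
lemma A5_enc: "A5 e x v (list_encode Ls) \<longleftrightarrow> (\<forall>z<v. \<exists>t\<in>set Ls. pfst t = psnd e \<and> snd3 t = cons_c z x \<and> thd3 t \<noteq> 0)"
  unfolding A5_def A5a_enc ..

lemma justc_enc: "justc e x v (list_encode Ls) \<longleftrightarrow> justS e x v (set Ls)"
  unfolding justc_def justS_def A3_enc A4_enc A5_enc memc_enc ..

lemma validc_enc: "validc (list_encode Ls) \<longleftrightarrow> closedS (set Ls)"
  unfolding validc_def closedS_def justc_enc by (subst all_enc[symmetric]) (rule refl)

lemma evalc_code: "evalc e x v \<longleftrightarrow> (\<exists>L. validc L \<and> memc (trip e x v) L)"
proof
  assume "evalc e x v"
  then obtain S where S: "finite S" "closedS S" "trip e x v \<in> S"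
    using evalc_cert unfolding certS_def by blast
  obtain Ls where Ls: "set Ls = S" using finite_list[OF S(1)] by blast
  show "\<exists>L. validc L \<and> memc (trip e x v) L"
    using S Ls by (intro exI[of _ "list_encode Ls"]) (simp add: validc_enc memc_enc)
next
  assume "\<exists>L. validc L \<and> memc (trip e x v) L"
  then obtain L where L: "validc L" "memc (trip e x v) L" by blast
  have "validc (list_encode (list_decode L))" "memc (trip e x v) (list_encode (list_decode L))"
    using L by simp_all
  then have "closedS (set (list_decode L))" "trip e x v \<in> set (list_decode L)"
    unfolding validc_enc memc_enc by simp_all
  then show "evalc e x v" using cert_sound by blast
qed

lemmas rfI = rf_intros rf_trip rf_snd3 rf_thd3

lemma crel_memc: "crel 2 (\<lambda>xs. memc (xs ! 0) (xs ! 1))"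
  apply (rule crel_bexN[of 3 "\<lambda>ys. nth_c (ys ! 2) (ys ! 0) = ys ! 1" 2 "\<lambda>xs. len_c (xs ! 1)"])
     apply (intro crel_intros rfI; simp)
    apply simp
   apply (intro rfI; simp)
  apply (simp add: memc_def nth_Cons')
  done

lemmas memcI = crel_lift2[OF crel_memc]

lemma crel_B3: "crel 4 (\<lambda>xs. B3 (xs ! 0) (xs ! 1) (xs ! 2) (xs ! 3))"
  apply (rule crel_ballN[of 5 "\<lambda>ys. memc (trip (nth_c (ys ! 1) (ys ! 0)) (ys ! 2) (nth_c (ys ! 3) (ys ! 0))) (ys ! 4)"
      4 "\<lambda>xs. len_c (xs ! 0)"])
     apply (intro memcI crel_intros rfI; simp)
    apply simp
   apply (intro rfI; simp)
  apply (simp add: B3_def nth_Cons')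
  done

lemmas B3I = crel_lift4[OF crel_B3]

lemma crel_A3: "crel 4 (\<lambda>xs. A3 (xs ! 0) (xs ! 1) (xs ! 2) (xs ! 3))"
  apply (rule crel_bexN[of 5 "\<lambda>ys. pfst (nth_c (ys ! 4) (ys ! 0)) = pfst (psnd (ys ! 1)) \<and> thd3 (nth_c (ys ! 4) (ys ! 0)) = ys ! 3 \<and>
     len_c (snd3 (nth_c (ys ! 4) (ys ! 0))) = len_c (psnd (psnd (ys ! 1))) \<and>
     B3 (psnd (psnd (ys ! 1))) (ys ! 2) (snd3 (nth_c (ys ! 4) (ys ! 0))) (ys ! 4)" 4 "\<lambda>xs. len_c (xs ! 3)"])
     apply (intro B3I crel_intros rfI; simp)
    apply simp
   apply (intro rfI; simp)
  apply (simp add: A3_def nth_Cons')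
  done

lemma crel_A4: "crel 4 (\<lambda>xs. A4 (xs ! 0) (xs ! 1) (xs ! 2) (xs ! 3))"
  apply (rule crel_bexN[of 5 "\<lambda>ys. pfst (nth_c (ys ! 4) (ys ! 0)) = ys ! 1 \<and>
     snd3 (nth_c (ys ! 4) (ys ! 0)) = cons_c (hd_c (ys ! 2) - 1) (tl_c (ys ! 2)) \<and>
     memc (trip (psnd (psnd (ys ! 1))) (cons_c (hd_c (ys ! 2) - 1) (cons_c (thd3 (nth_c (ys ! 4) (ys ! 0))) (tl_c (ys ! 2)))) (ys ! 3)) (ys ! 4)"
     4 "\<lambda>xs. len_c (xs ! 3)"])
     apply (intro memcI crel_intros rfI; simp)
    apply simp
   apply (intro rfI; simp)
  apply (simp add: A4_def nth_Cons')
  done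

lemma crel_A5a: "crel 4 (\<lambda>xs. A5a (xs ! 0) (xs ! 1) (xs ! 2) (xs ! 3))"
  apply (rule crel_bexN[of 5 "\<lambda>ys. pfst (nth_c (ys ! 4) (ys ! 0)) = psnd (ys ! 1) \<and>
     snd3 (nth_c (ys ! 4) (ys ! 0)) = cons_c (ys ! 3) (ys ! 2) \<and> thd3 (nth_c (ys ! 4) (ys ! 0)) \<noteq> 0"
     4 "\<lambda>xs. len_c (xs ! 3)"])
     apply (intro crel_intros rfI; simp)
    apply simp
   apply (intro rfI; simp)
  apply (simp add: A5a_def nth_Cons')
  done

lemma crel_A5: "crel 4 (\<lambda>xs. A5 (xs ! 0) (xs ! 1) (xs ! 2) (xs ! 3))"
  apply (rule crel_ballN[of 5 "\<lambda>ys. A5a (ys ! 1) (ys ! 2) (ys ! 0) (ys ! 4)" 4 "\<lambda>xs. xs ! 2"])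
     apply (intro crel_lift4[OF crel_A5a] rfI; simp)
    apply simp
   apply (intro rfI; simp)
  apply (simp add: A5_def nth_Cons')
  done

lemma crel_justc: "crel 4 (\<lambda>xs. justc (xs ! 0) (xs ! 1) (xs ! 2) (xs ! 3))"
  unfolding justc_def
  by (intro crel_intros crel_lift4[OF crel_A3] crel_lift4[OF crel_A4] crel_lift4[OF crel_A5] memcI rfI; simp)

lemma crel_validc: "crel 1 (\<lambda>xs. validc (xs ! 0))"
  apply (rule crel_ballN[of 2 "\<lambda>ys. justc (pfst (nth_c (ys ! 1) (ys ! 0))) (snd3 (nth_c (ys ! 1) (ys ! 0)))
      (thd3 (nth_c (ys ! 1) (ys ! 0))) (ys ! 1)" 1 "\<lambda>xs. len_c (xs ! 0)"])
     apply (intro crel_lift4[OF crel_justc] rfI; simp)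
    apply simp
   apply (intro rfI; simp)
  apply (simp add: validc_def nth_Cons')
  done

definition V0 :: "nat \<Rightarrow> nat \<Rightarrow> nat \<Rightarrow> bool" where
  "V0 e z c \<longleftrightarrow> validc (pfst z) \<and> memc (trip e (cons_c (psnd z) c) 0) (pfst z)"

lemma crel_V0: "crel 3 (\<lambda>xs. V0 (xs ! 1) (xs ! 0) (xs ! 2))"
  unfolding V0_def
  by (intro crel_intros crel_lift1[OF crel_validc] memcI rfI; simp)

lemma V0_iff: "(\<exists>y. evalc e (cons_c y c) 0) \<longleftrightarrow> (\<exists>z. V0 e z c)"
proof
  assume "\<exists>y. evalc e (cons_c y c) 0"
  then obtain y L where "validc L" "memc (trip e (cons_c y c) 0) L" using evalc_code by blast
  then show "\<exists>z. V0 e z c" unfolding V0_def by (intro exI[of _ "pe L y"]) simp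
next
  assume "\<exists>z. V0 e z c"
  then obtain z where "V0 e z c" by blast
  then have "evalc e (cons_c (psnd z) c) 0" unfolding V0_def using evalc_code by blast
  then show "\<exists>y. evalc e (cons_c y c) 0" by blast
qed

lemma rf_tl: "rf k f \<Longrightarrow> rf (Suc k) (\<lambda>ys. f (tl ys))"
  using rf_drop[of k f 1] by (simp add: drop_Suc)

lemma crel_tl: "crel k P \<Longrightarrow> crel (Suc k) (\<lambda>ys. P (tl ys))"
proof -
  assume "crel k P"
  then obtain g where g: "rf k g" "\<forall>xs. length xs = k \<longrightarrow> (P xs \<longleftrightarrow> g xs = 0)" unfolding crel_def by blast
  show ?thesis by (rule crel_intro[OF rf_tl[OF g(1)]]) (use g(2) in simp)
qed

lemma SigmaI: "Sigma_rel n (Suc k) (\<lambda>xs. \<not> Q xs) \<Longrightarrow> (\<And>xs. length xs = k \<Longrightarrow> P xs \<longleftrightarrow> (\<exists>y. Q (y # xs)))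
   \<Longrightarrow> Sigma_rel (Suc n) k P"
  by auto

lemma Sigma_cong: "Sigma_rel n k P \<Longrightarrow> (\<And>xs. length xs = k \<Longrightarrow> P xs \<longleftrightarrow> Q xs) \<Longrightarrow> Sigma_rel n k Q"
proof (induction n)
  case 0
  then show ?case using crel_cong[of k P Q] by (simp add: computable_rel_crel)
next
  case (Suc n)
  then show ?case by simp
qed

lemma Sigma_subst:
  "Sigma_rel n m P \<Longrightarrow> length fs = m \<Longrightarrow> \<forall>f\<in>set fs. rf k f \<Longrightarrow> Sigma_rel n k (\<lambda>xs. P (map (\<lambda>f. f xs) fs))"
proof (induction n arbitrary: m P k fs)
  case 0
  then show ?case using crel_comp[of m P fs k] by (simp add: computable_rel_crel)
next
  case (Suc n)
  from Suc.prems(1) obtain Q where Q: "Sigma_rel n (Suc m) (\<lambda>xs. \<not> Q xs)"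
    "\<forall>xs. length xs = m \<longrightarrow> (P xs \<longleftrightarrow> (\<exists>y. Q (y # xs)))" by auto
  define fs' where "fs' = (\<lambda>ys. ys ! 0) # map (\<lambda>f ys. f (tl ys)) fs"
  have "Sigma_rel n (Suc k) (\<lambda>ys. \<not> Q (map (\<lambda>f. f ys) fs'))"
    using Suc.IH[OF Q(1), of fs' "Suc k"] Suc.prems(2,3) by (auto simp: fs'_def intro: rf_proj rf_tl)
  then have "Sigma_rel n (Suc k) (\<lambda>ys. \<not> Q (hd ys # map (\<lambda>f. f (tl ys)) fs))"
    by (rule Sigma_cong) (auto simp: fs'_def comp_def length_Suc_conv)
  then show ?case by (rule SigmaI) (use Q(2) Suc.prems(2) in simp)
qed

lemma Sigma_subst1: "Sigma_rel n 1 (\<lambda>xs. R (xs ! 0)) \<Longrightarrow> rf k f \<Longrightarrow> Sigma_rel n k (\<lambda>xs. R (f xs))"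
  using Sigma_subst[of n 1 "\<lambda>xs. R (xs ! 0)" "[f]" k] by simp
lemma Sigma_subst2: "Sigma_rel n 2 (\<lambda>xs. R (xs ! 0) (xs ! 1)) \<Longrightarrow> rf k f \<Longrightarrow> rf k g \<Longrightarrow>
   Sigma_rel n k (\<lambda>xs. R (f xs) (g xs))"
  using Sigma_subst[of n 2 "\<lambda>xs. R (xs ! 0) (xs ! 1)" "[f, g]" k] by simp
lemma Sigma_subst3: "Sigma_rel n 3 (\<lambda>xs. R (xs ! 0) (xs ! 1) (xs ! 2)) \<Longrightarrow> rf k f \<Longrightarrow> rf k g \<Longrightarrow> rf k h \<Longrightarrow>
   Sigma_rel n k (\<lambda>xs. R (f xs) (g xs) (h xs))"
  using Sigma_subst[of n 3 "\<lambda>xs. R (xs ! 0) (xs ! 1) (xs ! 2)" "[f, g, h]" k] by (simp add: numeral_3_eq_3)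

lemma crel_Sigma: "crel k P \<Longrightarrow> Sigma_rel n k P"
proof (induction n arbitrary: k P)
  case 0
  then show ?case by (simp add: computable_rel_crel)
next
  case (Suc n)
  have "crel (Suc k) (\<lambda>ys. \<not> P (tl ys))" by (rule crel_tl[OF crel_not[OF Suc.prems]])
  then have "Sigma_rel n (Suc k) (\<lambda>ys. \<not> P (tl ys))" by (rule Suc.IH)
  then show ?case by (simp only: Sigma_rel.simps) (intro exI[of _ "\<lambda>ys. P (tl ys)"]; simp)
qed

lemma Sigma_andor:
  "Sigma_rel n k P \<Longrightarrow> Sigma_rel n k Q \<Longrightarrow> Sigma_rel n k (\<lambda>xs. P xs \<and> Q xs) \<and> Sigma_rel n k (\<lambda>xs. P xs \<or> Q xs)"
proof (induction n arbitrary: k P Q)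
  case 0
  then show ?case by (simp add: computable_rel_crel crel_and crel_or)
next
  case (Suc n)
  from Suc.prems(1) obtain Q1 where Q1: "Sigma_rel n (Suc k) (\<lambda>xs. \<not> Q1 xs)"
    "\<forall>xs. length xs = k \<longrightarrow> (P xs \<longleftrightarrow> (\<exists>y. Q1 (y # xs)))" by auto
  from Suc.prems(2) obtain Q2 where Q2: "Sigma_rel n (Suc k) (\<lambda>xs. \<not> Q2 xs)"
    "\<forall>xs. length xs = k \<longrightarrow> (Q xs \<longleftrightarrow> (\<exists>y. Q2 (y # xs)))" by auto
  have hor: "Sigma_rel (Suc n) k (\<lambda>xs. P xs \<or> Q xs)"
  proof -
    have "Sigma_rel n (Suc k) (\<lambda>xs. \<not> Q1 xs \<and> \<not> Q2 xs)" using Suc.IH[OF Q1(1) Q2(1)] by blast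
    then have "Sigma_rel n (Suc k) (\<lambda>xs. \<not> (Q1 xs \<or> Q2 xs))" by simp
    then show ?thesis by (rule SigmaI) (use Q1(2) Q2(2) in auto)
  qed
  have hand: "Sigma_rel (Suc n) k (\<lambda>xs. P xs \<and> Q xs)"
  proof -
    define fs1 where "fs1 = (\<lambda>ys. pfst (ys ! 0)) # map (\<lambda>i ys. ys ! Suc i) [0..<k]"
    define fs2 where "fs2 = (\<lambda>ys. psnd (ys ! 0)) # map (\<lambda>i ys. ys ! Suc i) [0..<k]"
    have m1: "map (\<lambda>f. f ys) fs1 = pfst (hd ys) # tl ys" if "length ys = Suc k" for ys
      using that by (cases ys) (auto simp: fs1_def intro!: nth_equalityI)
    have m2: "map (\<lambda>f. f ys) fs2 = psnd (hd ys) # tl ys" if "length ys = Suc k" for ys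
      using that by (cases ys) (auto simp: fs2_def intro!: nth_equalityI)
    have s1: "Sigma_rel n (Suc k) (\<lambda>ys. \<not> Q1 (map (\<lambda>f. f ys) fs1))"
      by (rule Sigma_subst[OF Q1(1)]) (auto simp: fs1_def intro!: rf_pfst rf_proj)
    have s2: "Sigma_rel n (Suc k) (\<lambda>ys. \<not> Q2 (map (\<lambda>f. f ys) fs2))"
      by (rule Sigma_subst[OF Q2(1)]) (auto simp: fs2_def intro!: rf_psnd rf_proj)
    have "Sigma_rel n (Suc k) (\<lambda>ys. \<not> Q1 (map (\<lambda>f. f ys) fs1) \<or> \<not> Q2 (map (\<lambda>f. f ys) fs2))"
      using Suc.IH[OF s1 s2] by blast
    then have "Sigma_rel n (Suc k) (\<lambda>ys. \<not> (Q1 (pfst (hd ys) # tl ys) \<and> Q2 (psnd (hd ys) # tl ys)))"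
      by (rule Sigma_cong) (simp add: m1 m2)
    moreover have "((P xs \<and> Q xs) \<longleftrightarrow>
        (\<exists>w. (\<lambda>ys. Q1 (pfst (hd ys) # tl ys) \<and> Q2 (psnd (hd ys) # tl ys)) (w # xs)))" if l: "length xs = k" for xs
    proof -
      show "(P xs \<and> Q xs) \<longleftrightarrow> (\<exists>w. (\<lambda>ys. Q1 (pfst (hd ys) # tl ys) \<and> Q2 (psnd (hd ys) # tl ys)) (w # xs))"
      proof
        assume "P xs \<and> Q xs"
        then obtain y1 y2 where "Q1 (y1 # xs)" "Q2 (y2 # xs)" using Q1(2) Q2(2) l by blast
        then show "\<exists>w. (\<lambda>ys. Q1 (pfst (hd ys) # tl ys) \<and> Q2 (psnd (hd ys) # tl ys)) (w # xs)"
          by (intro exI[of _ "pe y1 y2"]) simp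
      next
        assume "\<exists>w. (\<lambda>ys. Q1 (pfst (hd ys) # tl ys) \<and> Q2 (psnd (hd ys) # tl ys)) (w # xs)"
        then obtain w where "Q1 (pfst w # xs)" "Q2 (psnd w # xs)" by auto
        then show "P xs \<and> Q xs" using Q1(2) Q2(2) l by blast
      qed
    qed
    ultimately show ?thesis by (rule SigmaI) simp
  qed
  show ?case using hand hor by blast
qed

lemma Sigma_and: "Sigma_rel n k P \<Longrightarrow> Sigma_rel n k Q \<Longrightarrow> Sigma_rel n k (\<lambda>xs. P xs \<and> Q xs)"
  using Sigma_andor by blast
lemma Sigma_or: "Sigma_rel n k P \<Longrightarrow> Sigma_rel n k Q \<Longrightarrow> Sigma_rel n k (\<lambda>xs. P xs \<or> Q xs)"
  using Sigma_andor by blast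

lemma Pi_and: "Pi_rel n k P \<Longrightarrow> Pi_rel n k Q \<Longrightarrow> Pi_rel n k (\<lambda>xs. P xs \<and> Q xs)"
  unfolding Pi_rel_def using Sigma_or[of n k "\<lambda>xs. \<not> P xs" "\<lambda>xs. \<not> Q xs"] by simp
lemma Pi_or: "Pi_rel n k P \<Longrightarrow> Pi_rel n k Q \<Longrightarrow> Pi_rel n k (\<lambda>xs. P xs \<or> Q xs)"
  unfolding Pi_rel_def using Sigma_and[of n k "\<lambda>xs. \<not> P xs" "\<lambda>xs. \<not> Q xs"] by simp
lemma crel_Pi: "crel k P \<Longrightarrow> Pi_rel n k P"
  unfolding Pi_rel_def by (rule crel_Sigma[OF crel_not])
lemma Pi_cong: "Pi_rel n k P \<Longrightarrow> (\<And>xs. length xs = k \<Longrightarrow> P xs \<longleftrightarrow> Q xs) \<Longrightarrow> Pi_rel n k Q"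
  unfolding Pi_rel_def by (erule Sigma_cong) simp
lemma Pi_subst2: "Pi_rel n 2 (\<lambda>xs. R (xs ! 0) (xs ! 1)) \<Longrightarrow> rf k f \<Longrightarrow> rf k g \<Longrightarrow>
   Pi_rel n k (\<lambda>xs. R (f xs) (g xs))"
  unfolding Pi_rel_def by (rule Sigma_subst2[of n "\<lambda>a b. \<not> R a b"])
lemma Pi_subst3: "Pi_rel n 3 (\<lambda>xs. R (xs ! 0) (xs ! 1) (xs ! 2)) \<Longrightarrow> rf k f \<Longrightarrow> rf k g \<Longrightarrow> rf k h \<Longrightarrow>
   Pi_rel n k (\<lambda>xs. R (f xs) (g xs) (h xs))"
  unfolding Pi_rel_def by (rule Sigma_subst3[of n "\<lambda>a b c. \<not> R a b c"])

lemma rf_hd: "rf (Suc k) (\<lambda>ys. hd ys)"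
  by (rule rf_cong[OF rf_proj[of 0 "Suc k"]]) (auto simp: length_Suc_conv)

lemma SigmaN: "Sigma_rel n m (\<lambda>xs. \<not> Q xs) \<Longrightarrow> m = Suc k \<Longrightarrow> (\<And>xs. length xs = k \<Longrightarrow> P xs \<longleftrightarrow> (\<exists>y. Q (y # xs)))
   \<Longrightarrow> Sigma_rel (Suc n) k P"
  by auto

lemma Pi_ball:
  assumes "Pi_rel n (Suc k) P" "rf k b"
  shows "Pi_rel n k (\<lambda>xs. \<forall>i<b xs. P (i # xs))"
proof (cases n)
  case 0
  have "crel (Suc k) (\<lambda>xs. \<not> P xs)" using assms(1) 0 by (simp add: Pi_rel_def computable_rel_crel)
  then have "crel k (\<lambda>xs. \<exists>i<b xs. \<not> P (i # xs))" by (rule crel_bex[OF _ assms(2)])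
  then show ?thesis using 0 by (simp add: Pi_rel_def computable_rel_crel)
next
  case (Suc m)
  from assms(1) obtain Q where Q: "Sigma_rel m (Suc (Suc k)) (\<lambda>xs. \<not> Q xs)"
    "\<forall>ys. length ys = Suc k \<longrightarrow> (\<not> P ys \<longleftrightarrow> (\<exists>y. Q (y # ys)))"
    unfolding Pi_rel_def Suc by auto
  define fs where "fs = (\<lambda>ys. psnd (ys ! 0)) # (\<lambda>ys. pfst (ys ! 0)) # map (\<lambda>i ys. ys ! Suc i) [0..<k]"
  have mf: "map (\<lambda>f. f ys) fs = psnd (hd ys) # pfst (hd ys) # tl ys" if "length ys = Suc k" for ys
    using that by (cases ys) (auto simp: fs_def intro!: nth_equalityI)
  have s1: "Sigma_rel m (Suc k) (\<lambda>ys. \<not> Q (map (\<lambda>f. f ys) fs))"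
    by (rule Sigma_subst[OF Q(1)]) (auto simp: fs_def intro!: rf_pfst rf_psnd rf_proj)
  have s2: "Sigma_rel m (Suc k) (\<lambda>ys. \<not> pfst (hd ys) < b (tl ys))"
    by (rule crel_Sigma) (intro crel_not crel_less rf_pfst rf_hd rf_tl[OF assms(2)])
  have "Sigma_rel m (Suc k) (\<lambda>ys. \<not> pfst (hd ys) < b (tl ys) \<or> \<not> Q (map (\<lambda>f. f ys) fs))"
    by (rule Sigma_or[OF s2 s1])
  then have "Sigma_rel m (Suc k) (\<lambda>ys. \<not> (pfst (hd ys) < b (tl ys) \<and> Q (psnd (hd ys) # pfst (hd ys) # tl ys)))"
    by (rule Sigma_cong) (simp add: mf)
  then have "Sigma_rel (Suc m) k (\<lambda>xs. \<not> (\<forall>i<b xs. P (i # xs)))"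
  proof (rule SigmaI)
    fix xs :: "nat list" assume l: "length xs = k"
    show "(\<not> (\<forall>i<b xs. P (i # xs))) \<longleftrightarrow>
       (\<exists>w. pfst (hd (w # xs)) < b (tl (w # xs)) \<and> Q (psnd (hd (w # xs)) # pfst (hd (w # xs)) # tl (w # xs)))"
    proof
      assume "\<not> (\<forall>i<b xs. P (i # xs))"
      then obtain i where i: "i < b xs" "\<not> P (i # xs)" by blast
      then obtain y where "Q (y # i # xs)" using Q(2) l by auto
      then show "\<exists>w. pfst (hd (w # xs)) < b (tl (w # xs)) \<and> Q (psnd (hd (w # xs)) # pfst (hd (w # xs)) # tl (w # xs))"
        using i by (intro exI[of _ "pe i y"]) simp
    next
      assume "\<exists>w. pfst (hd (w # xs)) < b (tl (w # xs)) \<and> Q (psnd (hd (w # xs)) # pfst (hd (w # xs)) # tl (w # xs))"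
      then obtain w where w: "pfst w < b xs" "Q (psnd w # pfst w # xs)" by auto
      then have "\<not> P (pfst w # xs)" using Q(2) l by auto
      then show "\<not> (\<forall>i<b xs. P (i # xs))" using w(1) by blast
    qed
  qed
  then show ?thesis unfolding Pi_rel_def Suc .
qed

fun Vn :: "nat \<Rightarrow> nat \<Rightarrow> nat \<Rightarrow> nat \<Rightarrow> bool" where
  "Vn 0 e z c = V0 e z c"
| "Vn (Suc m) e z c = (\<not> (\<exists>y. Vn m e y (cons_c z c)))"

definition Usig :: "nat \<Rightarrow> nat \<Rightarrow> nat \<Rightarrow> bool" where
  "Usig m e c \<longleftrightarrow> (\<exists>z. Vn m e z c)"

lemma Vn_Un_complexity:
  "Pi_rel m 3 (\<lambda>xs. Vn m (xs ! 1) (xs ! 0) (xs ! 2)) \<and> Sigma_rel (Suc m) 2 (\<lambda>xs. Usig m (xs ! 0) (xs ! 1))"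
proof (induction m)
  case 0
  have p: "Pi_rel 0 3 (\<lambda>xs. Vn 0 (xs ! 1) (xs ! 0) (xs ! 2))"
    unfolding Pi_rel_def using crel_not[OF crel_V0] by (simp add: computable_rel_crel)
  then have s: "Sigma_rel 0 3 (\<lambda>xs. \<not> Vn 0 (xs ! 1) (xs ! 0) (xs ! 2))" unfolding Pi_rel_def .
  have "Sigma_rel (Suc 0) 2 (\<lambda>xs. Usig 0 (xs ! 0) (xs ! 1))"
    by (rule SigmaN[OF s]) (simp_all add: Usig_def)
  then show ?case using p by simp
next
  case (Suc m)
  have u: "Sigma_rel (Suc m) 2 (\<lambda>xs. Usig m (xs ! 0) (xs ! 1))" using Suc.IH by (rule conjunct2)
  have "Sigma_rel (Suc m) 3 (\<lambda>xs. Usig m (xs ! 1) (cons_c (xs ! 0) (xs ! 2)))"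
    apply (rule Sigma_subst2[OF u])
     apply (intro rfI; simp)
    apply (intro rfI; simp)
    done
  then have p: "Pi_rel (Suc m) 3 (\<lambda>xs. Vn (Suc m) (xs ! 1) (xs ! 0) (xs ! 2))"
    unfolding Pi_rel_def by (rule Sigma_cong) (simp add: Usig_def)
  then have s: "Sigma_rel (Suc m) 3 (\<lambda>xs. \<not> Vn (Suc m) (xs ! 1) (xs ! 0) (xs ! 2))" unfolding Pi_rel_def .
  have "Sigma_rel (Suc (Suc m)) 2 (\<lambda>xs. Usig (Suc m) (xs ! 0) (xs ! 1))"
    by (rule SigmaN[OF s]) (simp_all add: Usig_def)
  with p show ?case by simp
qed

lemma Un_universal:
  "Sigma_rel (Suc m) k P \<Longrightarrow> \<exists>e. \<forall>xs. length xs = k \<longrightarrow> (P xs \<longleftrightarrow> Usig m e (list_encode xs))"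
proof (induction m arbitrary: k P)
  case 0
  from 0 obtain Q where Q: "computable_rel (Suc k) (\<lambda>xs. \<not> Q xs)"
    "\<forall>xs. length xs = k \<longrightarrow> (P xs \<longleftrightarrow> (\<exists>y. Q (y # xs)))" by auto
  have "crel (Suc k) Q" using crel_not[of "Suc k" "\<lambda>xs. \<not> Q xs"] Q(1) by (simp add: computable_rel_crel)
  then obtain g where g: "rf (Suc k) g" "\<forall>xs. length xs = Suc k \<longrightarrow> (Q xs \<longleftrightarrow> g xs = 0)"
    unfolding crel_def by blast
  from g(1) obtain g' where g': "recfn (Suc k) g'" "\<forall>xs. length xs = Suc k \<longrightarrow> g' xs = g xs"
    unfolding rf_def by blast
  from recfn_code[OF g'(1)] obtain e where
    e: "\<forall>xs. length xs = Suc k \<longrightarrow> (\<forall>v. evalc e (list_encode xs) v \<longleftrightarrow> v = g' xs)" by blast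
  show ?case
  proof (rule exI[of _ e], rule allI, rule impI)
    fix xs :: "nat list" assume l: "length xs = k"
    have "P xs \<longleftrightarrow> (\<exists>y. Q (y # xs))" using Q(2) l by simp
    also have "\<dots> \<longleftrightarrow> (\<exists>y. evalc e (list_encode (y # xs)) 0)" using g(2) g'(2) e l by (simp del: list_encode.simps)
    also have "\<dots> \<longleftrightarrow> (\<exists>y. evalc e (cons_c y (list_encode xs)) 0)" by (simp del: list_encode.simps add: enc_Cons)
    also have "\<dots> \<longleftrightarrow> Usig 0 e (list_encode xs)" by (simp add: Usig_def V0_iff)
    finally show "P xs \<longleftrightarrow> Usig 0 e (list_encode xs)" .
  qed
next
  case (Suc m)
  from Suc.prems obtain Q where Q: "Sigma_rel (Suc m) (Suc k) (\<lambda>xs. \<not> Q xs)"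
    "\<forall>xs. length xs = k \<longrightarrow> (P xs \<longleftrightarrow> (\<exists>y. Q (y # xs)))" by auto
  from Suc.IH[OF Q(1)] obtain e where e: "\<forall>xs. length xs = Suc k \<longrightarrow> ((\<not> Q xs) \<longleftrightarrow> Usig m e (list_encode xs))"
    by blast
  show ?case
  proof (rule exI[of _ e], rule allI, rule impI)
    fix xs :: "nat list" assume l: "length xs = k"
    have "P xs \<longleftrightarrow> (\<exists>y. Q (y # xs))" using Q(2) l by simp
    also have "\<dots> \<longleftrightarrow> (\<exists>y. \<not> Usig m e (list_encode (y # xs)))"
    proof -
      have qq: "Q (y # xs) \<longleftrightarrow> \<not> Usig m e (list_encode (y # xs))" for y
        using e[rule_format, of "y # xs"] l by auto
      show ?thesis using qq by simp
    qed
    also have "\<dots> \<longleftrightarrow> Usig (Suc m) e (list_encode xs)"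
      by (simp del: list_encode.simps add: enc_Cons Usig_def)
    finally show "P xs \<longleftrightarrow> Usig (Suc m) e (list_encode xs)" .
  qed
qed

definition enc2 :: "nat \<Rightarrow> nat \<Rightarrow> nat" where "enc2 a b = cons_c a (cons_c b 0)"

lemma enc2_list: "list_encode [a, b] = enc2 a b"
  by (simp del: list_encode.simps add: enc_Cons enc2_def list_encode.simps(1))

definition Rv :: "nat \<Rightarrow> nat \<Rightarrow> nat \<Rightarrow> nat \<Rightarrow> nat \<Rightarrow> bool" where
  "Rv m e z a b \<longleftrightarrow> Vn m e z (enc2 a b)"

definition Rok :: "nat \<Rightarrow> nat \<Rightarrow> nat \<Rightarrow> bool" where
  "Rok m e t \<longleftrightarrow> Rv m e (thd3 t) (pfst t) (snd3 t) \<or> Rv m e (thd3 t) (snd3 t) (pfst t)"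

definition linkedc :: "nat \<Rightarrow> bool" where
  "linkedc L \<longleftrightarrow> (\<forall>i<len_c L - 1. snd3 (nth_c L i) = pfst (nth_c L (Suc i)))"

definition allok :: "nat \<Rightarrow> nat \<Rightarrow> nat \<Rightarrow> bool" where
  "allok m e L \<longleftrightarrow> (\<forall>i<len_c L. Rok m e (nth_c L i))"

definition chainok :: "nat \<Rightarrow> nat \<Rightarrow> nat \<Rightarrow> bool" where
  "chainok m e L \<longleftrightarrow> len_c L \<noteq> 0 \<and> linkedc L \<and> allok m e L"

definition inpts :: "nat \<Rightarrow> nat \<Rightarrow> bool" where
  "inpts x L \<longleftrightarrow> (\<exists>i<len_c L. pfst (nth_c L i) = x \<or> snd3 (nth_c L i) = x)"

definition share :: "nat \<Rightarrow> nat \<Rightarrow> bool" where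
  "share L1 L2 \<longleftrightarrow> (\<exists>i<len_c L1. inpts (pfst (nth_c L1 i)) L2 \<or> inpts (snd3 (nth_c L1 i)) L2)"

definition Gr :: "nat \<Rightarrow> nat \<Rightarrow> nat \<Rightarrow> bool" where
  "Gr m a b \<longleftrightarrow> a \<noteq> b \<and> ((a < 4 \<and> b < 4 \<and> (a = Suc b \<or> b = Suc a)) \<or>
    (4 \<le> a \<and> 4 \<le> b \<and> (
      (pfst (a - 4) = 0 \<and> pfst (b - 4) = 1 \<and> pfst (psnd (a - 4)) = pfst (psnd (b - 4)) \<and>
        inpts (psnd (psnd (a - 4))) (psnd (psnd (b - 4))) \<and> chainok m (pfst (psnd (b - 4))) (psnd (psnd (b - 4)))) \<or>
      (pfst (a - 4) = 1 \<and> pfst (b - 4) = 0 \<and> pfst (psnd (a - 4)) = pfst (psnd (b - 4)) \<and>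
        inpts (psnd (psnd (b - 4))) (psnd (psnd (a - 4))) \<and> chainok m (pfst (psnd (a - 4))) (psnd (psnd (a - 4)))) \<or>
      (pfst (a - 4) = 1 \<and> pfst (b - 4) = 1 \<and> pfst (psnd (a - 4)) = pfst (psnd (b - 4)) \<and>
        share (psnd (psnd (a - 4))) (psnd (psnd (b - 4))) \<and>
        chainok m (pfst (psnd (a - 4))) (psnd (psnd (a - 4))) \<and> chainok m (pfst (psnd (b - 4))) (psnd (psnd (b - 4)))))))"

lemma share_iff: "share L1 L2 \<longleftrightarrow> (\<exists>p. inpts p L1 \<and> inpts p L2)"
proof
  assume "share L1 L2"
  then obtain i where i: "i < len_c L1" "inpts (pfst (nth_c L1 i)) L2 \<or> inpts (snd3 (nth_c L1 i)) L2"
    unfolding share_def by blast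
  from i(2) show "\<exists>p. inpts p L1 \<and> inpts p L2"
  proof
    assume "inpts (pfst (nth_c L1 i)) L2"
    moreover have "inpts (pfst (nth_c L1 i)) L1" unfolding inpts_def using i(1) by blast
    ultimately show ?thesis by blast
  next
    assume "inpts (snd3 (nth_c L1 i)) L2"
    moreover have "inpts (snd3 (nth_c L1 i)) L1" unfolding inpts_def using i(1) by blast
    ultimately show ?thesis by blast
  qed
next
  assume "\<exists>p. inpts p L1 \<and> inpts p L2"
  then obtain p i where "i < len_c L1" "pfst (nth_c L1 i) = p \<or> snd3 (nth_c L1 i) = p" "inpts p L2"
    unfolding inpts_def by blast
  then show "share L1 L2" unfolding share_def by blast
qed

lemma share_sym: "share L1 L2 \<longleftrightarrow> share L2 L1"
  unfolding share_iff by blast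

lemma Gr_sym: "Gr m a b \<Longrightarrow> Gr m b a"
proof -
  assume "Gr m a b"
  then show "Gr m b a"
    unfolding Gr_def
    apply (elim conjE disjE)
    apply (simp_all add: share_sym)
    done
qed

lemma Gr_irrefl: "\<not> Gr m a a"
  unfolding Gr_def by auto

section \<open>Complexity of the graph\<close>

lemma rf_enc2: "rf k f \<Longrightarrow> rf k g \<Longrightarrow> rf k (\<lambda>xs. enc2 (f xs) (g xs))"
  unfolding enc2_def by (intro rfI)

lemma Pi_Vn: "rf k f \<Longrightarrow> rf k g \<Longrightarrow> rf k h \<Longrightarrow> Pi_rel m k (\<lambda>xs. Vn m (g xs) (f xs) (h xs))"
proof -
  assume a: "rf k f" "rf k g" "rf k h"
  have "Pi_rel m 3 (\<lambda>xs. (\<lambda>z e c. Vn m e z c) (xs ! 0) (xs ! 1) (xs ! 2))"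
    using Vn_Un_complexity[of m] by simp
  from Pi_subst3[OF this a] show ?thesis by simp
qed

lemma Pi_Rv: "rf k f \<Longrightarrow> rf k g \<Longrightarrow> rf k h \<Longrightarrow> rf k i \<Longrightarrow> Pi_rel m k (\<lambda>xs. Rv m (f xs) (g xs) (h xs) (i xs))"
  unfolding Rv_def by (intro Pi_Vn rf_enc2)

lemma Pi_Rok: "rf k f \<Longrightarrow> rf k g \<Longrightarrow> Pi_rel m k (\<lambda>xs. Rok m (f xs) (g xs))"
  unfolding Rok_def by (intro Pi_or Pi_Rv rfI rf_snd3 rf_thd3)

lemma Pi_ballN: "Pi_rel n m P \<Longrightarrow> m = Suc k \<Longrightarrow> rf k b \<Longrightarrow>
   (\<And>xs. length xs = k \<Longrightarrow> Q xs \<longleftrightarrow> (\<forall>i<b xs. P (i # xs))) \<Longrightarrow> Pi_rel n k Q"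
proof -
  assume a: "Pi_rel n m P" "m = Suc k" "rf k b" "\<And>xs. length xs = k \<Longrightarrow> Q xs \<longleftrightarrow> (\<forall>i<b xs. P (i # xs))"
  have "Pi_rel n k (\<lambda>xs. \<forall>i<b xs. P (i # xs))" using Pi_ball[of n k P b] a(1-3) by simp
  then show "Pi_rel n k Q" by (rule Pi_cong) (simp add: a(4))
qed

lemma Pi_allok: "Pi_rel m 2 (\<lambda>xs. allok m (xs ! 0) (xs ! 1))"
  apply (rule Pi_ballN[of m 3 "\<lambda>ys. Rok m (ys ! 1) (nth_c (ys ! 2) (ys ! 0))" 2 "\<lambda>xs. len_c (xs ! 1)"])
     apply (intro Pi_Rok rfI; simp)
    apply simp
   apply (intro rfI; simp)
  apply (simp add: allok_def nth_Cons')
  done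

lemma crel_linkedc: "crel 1 (\<lambda>xs. linkedc (xs ! 0))"
  apply (rule crel_ballN[of 2 "\<lambda>ys. snd3 (nth_c (ys ! 1) (ys ! 0)) = pfst (nth_c (ys ! 1) (Suc (ys ! 0)))" 1
      "\<lambda>xs. len_c (xs ! 0) - 1"])
     apply (intro crel_intros rfI; simp)
    apply simp
   apply (intro rfI; simp)
  apply (simp add: linkedc_def nth_Cons')
  done

lemma crel_inpts: "crel 2 (\<lambda>xs. inpts (xs ! 0) (xs ! 1))"
  apply (rule crel_bexN[of 3 "\<lambda>ys. pfst (nth_c (ys ! 2) (ys ! 0)) = ys ! 1 \<or> snd3 (nth_c (ys ! 2) (ys ! 0)) = ys ! 1" 2
      "\<lambda>xs. len_c (xs ! 1)"])
     apply (intro crel_intros rfI; simp)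
    apply simp
   apply (intro rfI; simp)
  apply (simp add: inpts_def nth_Cons')
  done

lemmas inptsI = crel_lift2[OF crel_inpts]

lemma crel_share: "crel 2 (\<lambda>xs. share (xs ! 0) (xs ! 1))"
  apply (rule crel_bexN[of 3 "\<lambda>ys. inpts (pfst (nth_c (ys ! 1) (ys ! 0))) (ys ! 2) \<or> inpts (snd3 (nth_c (ys ! 1) (ys ! 0))) (ys ! 2)" 2
      "\<lambda>xs. len_c (xs ! 0)"])
     apply (intro inptsI crel_intros rfI; simp)
    apply simp
   apply (intro rfI; simp)
  apply (simp add: share_def nth_Cons')
  done

lemma Pi_chainok: "rf k f \<Longrightarrow> rf k g \<Longrightarrow> Pi_rel m k (\<lambda>xs. chainok m (f xs) (g xs))"
  unfolding chainok_def
  by (intro Pi_and Pi_subst2[of m "allok m", OF Pi_allok] crel_Pi[OF crel_not[OF crel_eq]]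
      crel_Pi[OF crel_lift1[OF crel_linkedc]] rfI)

lemma Pi_Gr: "Pi_rel m 2 (\<lambda>xs. Gr m (xs ! 0) (xs ! 1))"
  unfolding Gr_def
  by (intro Pi_and Pi_or Pi_chainok crel_Pi[OF crel_lift2[OF crel_share]] crel_Pi[OF inptsI]
      crel_Pi[OF crel_eq] crel_Pi[OF crel_less] crel_Pi[OF crel_le] crel_Pi[OF crel_not[OF crel_eq]]
      rfI; simp)

type_synonym tr = "nat \<times> nat \<times> nat"

definition tcode :: "tr \<Rightarrow> nat" where "tcode t = trip (fst t) (fst (snd t)) (snd (snd t))"
definition untc :: "nat \<Rightarrow> tr" where "untc t = (pfst t, snd3 t, thd3 t)"
definition Lcode :: "tr list \<Rightarrow> nat" where "Lcode Ls = list_encode (map tcode Ls)"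

lemma untc_tcode[simp]: "untc (tcode t) = t" by (simp add: untc_def tcode_def)
lemma tcode_untc[simp]: "tcode (untc t) = t" by (simp add: untc_def tcode_def)
lemma tcode_simps[simp]: "pfst (tcode t) = fst t" "snd3 (tcode t) = fst (snd t)" "thd3 (tcode t) = snd (snd t)"
  by (simp_all add: tcode_def)
lemma inj_tcode: "inj tcode" by (metis injI untc_tcode)
lemma Lcode_eq[simp]: "Lcode L1 = Lcode L2 \<longleftrightarrow> L1 = L2"
  unfolding Lcode_def list_encode_eq using inj_map_eq_map[OF inj_tcode] by blast
lemma Lcode_surj: "Lcode (map untc (list_decode L)) = L"
  unfolding Lcode_def by (simp add: comp_def)
lemma len_c_L[simp]: "len_c (Lcode Ls) = length Ls" by (simp add: Lcode_def len_c_enc)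
lemma nth_c_L[simp]: "i < length Ls \<Longrightarrow> nth_c (Lcode Ls) i = tcode (Ls ! i)" by (simp add: Lcode_def nth_c_enc)

fun linkedL :: "tr list \<Rightarrow> bool" where
  "linkedL (t1 # t2 # ts) = (fst (snd t1) = fst t2 \<and> linkedL (t2 # ts))"
| "linkedL _ = True"

lemma linkedL_nth: "linkedL Ls \<longleftrightarrow> (\<forall>i. Suc i < length Ls \<longrightarrow> fst (snd (Ls ! i)) = fst (Ls ! Suc i))"
proof (induction Ls rule: linkedL.induct)
  case (1 t1 t2 ts)
  show ?case
  proof
    assume "linkedL (t1 # t2 # ts)"
    then have h: "fst (snd t1) = fst t2" "\<forall>i. Suc i < length (t2 # ts) \<longrightarrow> fst (snd ((t2 # ts) ! i)) = fst ((t2 # ts) ! Suc i)"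
      using 1 by auto
    show "\<forall>i. Suc i < length (t1 # t2 # ts) \<longrightarrow> fst (snd ((t1 # t2 # ts) ! i)) = fst ((t1 # t2 # ts) ! Suc i)"
    proof (rule allI, rule impI)
      fix i assume i: "Suc i < length (t1 # t2 # ts)"
      show "fst (snd ((t1 # t2 # ts) ! i)) = fst ((t1 # t2 # ts) ! Suc i)"
      proof (cases i)
        case 0 then show ?thesis using h(1) by simp
      next
        case (Suc j) then show ?thesis using h(2) i by simp
      qed
    qed
  next
    assume h: "\<forall>i. Suc i < length (t1 # t2 # ts) \<longrightarrow> fst (snd ((t1 # t2 # ts) ! i)) = fst ((t1 # t2 # ts) ! Suc i)"
    have "fst (snd t1) = fst t2" using h[rule_format, of 0] by simp
    moreover have "\<forall>i. Suc i < length (t2 # ts) \<longrightarrow> fst (snd ((t2 # ts) ! i)) = fst ((t2 # ts) ! Suc i)"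
    proof (rule allI, rule impI)
      fix i assume "Suc i < length (t2 # ts)"
      then show "fst (snd ((t2 # ts) ! i)) = fst ((t2 # ts) ! Suc i)" using h[rule_format, of "Suc i"] by simp
    qed
    ultimately show "linkedL (t1 # t2 # ts)" using 1 by simp
  qed
next
  case "2_1" then show ?case by simp
next
  case ("2_2" v) then show ?case by simp
qed

lemma linkedc_L: "linkedc (Lcode Ls) \<longleftrightarrow> linkedL Ls"
  unfolding linkedL_nth linkedc_def
proof
  assume h: "\<forall>i<len_c (Lcode Ls) - 1. snd3 (nth_c (Lcode Ls) i) = pfst (nth_c (Lcode Ls) (Suc i))"
  show "\<forall>i. Suc i < length Ls \<longrightarrow> fst (snd (Ls ! i)) = fst (Ls ! Suc i)"
  proof (rule allI, rule impI)
    fix i assume "Suc i < length Ls"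
    then show "fst (snd (Ls ! i)) = fst (Ls ! Suc i)" using h[rule_format, of i] by simp
  qed
next
  assume h: "\<forall>i. Suc i < length Ls \<longrightarrow> fst (snd (Ls ! i)) = fst (Ls ! Suc i)"
  show "\<forall>i<len_c (Lcode Ls) - 1. snd3 (nth_c (Lcode Ls) i) = pfst (nth_c (Lcode Ls) (Suc i))"
  proof (rule allI, rule impI)
    fix i assume "i < len_c (Lcode Ls) - 1"
    then have "Suc i < length Ls" by simp
    then show "snd3 (nth_c (Lcode Ls) i) = pfst (nth_c (Lcode Ls) (Suc i))" using h by simp
  qed
qed

definition ptsL :: "tr list \<Rightarrow> nat set" where
  "ptsL Ls = fst ` set Ls \<union> (\<lambda>t. fst (snd t)) ` set Ls"

lemma inpts_L: "inpts x (Lcode Ls) \<longleftrightarrow> x \<in> ptsL Ls"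
proof
  assume "inpts x (Lcode Ls)"
  then obtain i where i: "i < length Ls" "fst (Ls ! i) = x \<or> fst (snd (Ls ! i)) = x"
    unfolding inpts_def by auto
  then have "Ls ! i \<in> set Ls" by simp
  then show "x \<in> ptsL Ls" using i(2) unfolding ptsL_def by blast
next
  assume "x \<in> ptsL Ls"
  then obtain t where t: "t \<in> set Ls" "fst t = x \<or> fst (snd t) = x" unfolding ptsL_def by blast
  then obtain i where i: "i < length Ls" "Ls ! i = t" by (auto simp: in_set_conv_nth)
  show "inpts x (Lcode Ls)" unfolding inpts_def using i t(2) by (intro exI[of _ i]) simp
qed

lemma share_L: "share (Lcode L1) (Lcode L2) \<longleftrightarrow> ptsL L1 \<inter> ptsL L2 \<noteq> {}"
  unfolding share_iff inpts_L by blast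

definition Rokt :: "nat \<Rightarrow> nat \<Rightarrow> tr \<Rightarrow> bool" where
  "Rokt m e t \<longleftrightarrow> Rv m e (snd (snd t)) (fst t) (fst (snd t)) \<or> Rv m e (snd (snd t)) (fst (snd t)) (fst t)"

lemma allok_L: "allok m e (Lcode Ls) \<longleftrightarrow> (\<forall>t\<in>set Ls. Rokt m e t)"
proof -
  have "allok m e (Lcode Ls) \<longleftrightarrow> (\<forall>i<length Ls. Rokt m e (Ls ! i))"
    unfolding allok_def by (auto simp: Rok_def Rokt_def)
  also have "\<dots> \<longleftrightarrow> (\<forall>t\<in>set Ls. Rokt m e t)" by (metis in_set_conv_nth)
  finally show ?thesis .
qed

definition chainL :: "nat \<Rightarrow> nat \<Rightarrow> tr list \<Rightarrow> bool" where
  "chainL m e Ls \<longleftrightarrow> Ls \<noteq> [] \<and> linkedL Ls \<and> (\<forall>t\<in>set Ls. Rokt m e t)"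

lemma chainok_L: "chainok m e (Lcode Ls) \<longleftrightarrow> chainL m e Ls"
  unfolding chainok_def chainL_def linkedc_L allok_L by simp

definition ptv :: "nat \<Rightarrow> nat \<Rightarrow> nat" where "ptv e x = 4 + pe 0 (pe e x)"
definition witv :: "nat \<Rightarrow> tr list \<Rightarrow> nat" where "witv e Ls = 4 + pe 1 (pe e (Lcode Ls))"

lemma ptv_eq[simp]: "ptv e x = ptv e' x' \<longleftrightarrow> e = e' \<and> x = x'" by (simp add: ptv_def)
lemma witv_eq[simp]: "witv e L = witv e' L' \<longleftrightarrow> e = e' \<and> L = L'" by (simp add: witv_def)
lemma ptv_witv[simp]: "ptv e x \<noteq> witv e' L" by (simp add: ptv_def witv_def)
lemma witv_ptv[simp]: "witv e' L \<noteq> ptv e x" by (simp add: ptv_def witv_def)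
lemma ptv_ge[simp]: "4 \<le> ptv e x" "\<not> ptv e x < 4" by (simp_all add: ptv_def)
lemma witv_ge[simp]: "4 \<le> witv e L" "\<not> witv e L < 4" by (simp_all add: witv_def)

lemma Gr_pt_wit: "Gr m (ptv e x) (witv e' Ls) \<longleftrightarrow> e = e' \<and> x \<in> ptsL Ls \<and> chainL m e' Ls"
  unfolding Gr_def by (simp add: ptv_def witv_def inpts_L chainok_L)

lemma Gr_wit_pt: "Gr m (witv e' Ls) (ptv e x) \<longleftrightarrow> e = e' \<and> x \<in> ptsL Ls \<and> chainL m e' Ls"
  using Gr_sym Gr_pt_wit by blast

lemma Gr_pt_pt: "\<not> Gr m (ptv e x) (ptv e' y)"
  unfolding Gr_def by (simp add: ptv_def)

lemma Gr_wit_wit: "Gr m (witv e1 L1) (witv e2 L2) \<longleftrightarrow>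
    L1 \<noteq> L2 \<and> e1 = e2 \<and> ptsL L1 \<inter> ptsL L2 \<noteq> {} \<and> chainL m e1 L1 \<and> chainL m e2 L2"
  unfolding Gr_def by (auto simp: witv_def share_L chainok_L)

lemma vertex_cases:
  obtains "v < 4" | e x where "v = ptv e x" | e Ls where "v = witv e Ls" | "4 \<le> v" "2 \<le> pfst (v - 4)"
proof -
  consider "v < 4" | "4 \<le> v" "pfst (v - 4) = 0" | "4 \<le> v" "pfst (v - 4) = 1" | "4 \<le> v" "2 \<le> pfst (v - 4)"
    by linarith
  then show ?thesis
  proof cases
    case 1 then show ?thesis using that by blast
  next
    case 2
    have "v = ptv (pfst (psnd (v - 4))) (psnd (psnd (v - 4)))"
      using 2 pe_surj[of "v - 4"] pe_surj[of "psnd (v - 4)"] unfolding ptv_def by simp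
    then show ?thesis using that by blast
  next
    case 3
    have "v = witv (pfst (psnd (v - 4))) (map untc (list_decode (psnd (psnd (v - 4)))))"
      using 3 pe_surj[of "v - 4"] pe_surj[of "psnd (v - 4)"] unfolding witv_def Lcode_surj by simp
    then show ?thesis using that by blast
  qed (use that in blast)
qed

lemma Gr_junk: "4 \<le> v \<Longrightarrow> 2 \<le> pfst (v - 4) \<Longrightarrow> \<not> Gr m v w"
  unfolding Gr_def by auto

lemma Gr_small: "a < 4 \<Longrightarrow> Gr m a b \<longleftrightarrow> b < 4 \<and> a \<noteq> b \<and> (a = Suc b \<or> b = Suc a)"
  unfolding Gr_def by auto

lemma Gr_big: "4 \<le> a \<Longrightarrow> Gr m a b \<Longrightarrow> 4 \<le> b"
  unfolding Gr_def by auto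

definition swp :: "tr \<Rightarrow> tr" where "swp t = (fst (snd t), fst t, snd (snd t))"
definition rv :: "tr list \<Rightarrow> tr list" where "rv Ls = rev (map swp Ls)"

lemma linkedL_Cons2: "linkedL (t # ts) \<longleftrightarrow> (ts = [] \<or> (fst (snd t) = fst (hd ts) \<and> linkedL ts))"
  by (cases ts) auto

lemma linkedL_append:
  "linkedL xs \<Longrightarrow> linkedL ys \<Longrightarrow> xs \<noteq> [] \<Longrightarrow> ys \<noteq> [] \<Longrightarrow> fst (snd (last xs)) = fst (hd ys) \<Longrightarrow> linkedL (xs @ ys)"
proof (induction xs)
  case Nil then show ?case by simp
next
  case (Cons x xs)
  show ?case
  proof (cases "xs = []")
    case True
    then show ?thesis using Cons.prems by (simp add: linkedL_Cons2)
  next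
    case False
    have "linkedL xs" "fst (snd x) = fst (hd xs)" using Cons.prems(1) False by (simp_all add: linkedL_Cons2)
    moreover have "linkedL (xs @ ys)" using Cons False \<open>linkedL xs\<close> by simp
    ultimately show ?thesis using False by (simp add: linkedL_Cons2)
  qed
qed

lemma fst_swp[simp]: "fst (swp t) = fst (snd t)" "fst (snd (swp t)) = fst t" "snd (snd (swp t)) = snd (snd t)"
  by (simp_all add: swp_def)

lemma rv_Cons: "rv (x # xs) = rv xs @ [swp x]" by (simp add: rv_def)
lemma rv_ne[simp]: "rv xs = [] \<longleftrightarrow> xs = []" by (simp add: rv_def)
lemma hd_rv: "xs \<noteq> [] \<Longrightarrow> hd (rv xs) = swp (last xs)" by (simp add: rv_def hd_rev last_map)
lemma last_rv: "xs \<noteq> [] \<Longrightarrow> last (rv xs) = swp (hd xs)" by (simp add: rv_def last_rev hd_map)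
lemma set_rv: "set (rv xs) = swp ` set xs" by (simp add: rv_def)

lemma linkedL_rv: "linkedL xs \<Longrightarrow> linkedL (rv xs)"
proof (induction xs)
  case Nil then show ?case by (simp add: rv_def)
next
  case (Cons x xs)
  show ?case
  proof (cases "xs = []")
    case True then show ?thesis by (simp add: rv_def)
  next
    case False
    have l: "linkedL xs" "fst (snd x) = fst (hd xs)" using Cons.prems False by (simp_all add: linkedL_Cons2)
    have "linkedL (rv xs @ [swp x])"
      by (rule linkedL_append) (use Cons.IH l False in \<open>simp_all add: last_rv\<close>)
    then show ?thesis by (simp add: rv_Cons)
  qed
qed

lemma linkedL_take: "linkedL xs \<Longrightarrow> linkedL (take n xs)"
  unfolding linkedL_nth by auto

lemma Rokt_swp: "Rokt m e (swp t) \<longleftrightarrow> Rokt m e t"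
  unfolding Rokt_def by auto

definition Link :: "nat \<Rightarrow> nat \<Rightarrow> nat \<Rightarrow> nat \<Rightarrow> bool" where
  "Link m e p q \<longleftrightarrow> (\<exists>Ls. chainL m e Ls \<and> fst (hd Ls) = p \<and> fst (snd (last Ls)) = q)"

lemma chainL_rv: "chainL m e Ls \<Longrightarrow> chainL m e (rv Ls)"
  unfolding chainL_def using linkedL_rv by (auto simp: set_rv Rokt_swp)

lemma Link_sym: "Link m e p q \<Longrightarrow> Link m e q p"
proof -
  assume "Link m e p q"
  then obtain Ls where Ls: "chainL m e Ls" "fst (hd Ls) = p" "fst (snd (last Ls)) = q" unfolding Link_def by blast
  have ne: "Ls \<noteq> []" using Ls(1) by (simp add: chainL_def)
  show "Link m e q p" unfolding Link_def
    using chainL_rv[OF Ls(1)] Ls ne by (intro exI[of _ "rv Ls"]) (simp add: hd_rv last_rv)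
qed

lemma Link_trans: "Link m e p q \<Longrightarrow> Link m e q r \<Longrightarrow> Link m e p r"
proof -
  assume "Link m e p q" "Link m e q r"
  then obtain L1 L2 where L1: "chainL m e L1" "fst (hd L1) = p" "fst (snd (last L1)) = q"
    and L2: "chainL m e L2" "fst (hd L2) = q" "fst (snd (last L2)) = r" unfolding Link_def by blast
  have "chainL m e (L1 @ L2)"
    using L1 L2 linkedL_append[of L1 L2] unfolding chainL_def by auto
  moreover have "fst (hd (L1 @ L2)) = p" "fst (snd (last (L1 @ L2))) = r"
    using L1 L2 by (auto simp: chainL_def)
  ultimately show "Link m e p r" unfolding Link_def by blast
qed

lemma Link_hd_b: "chainL m e Ls \<Longrightarrow> i < length Ls \<Longrightarrow> Link m e (fst (hd Ls)) (fst (snd (Ls ! i)))"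
proof -
  assume c: "chainL m e Ls" and i: "i < length Ls"
  let ?T = "take (Suc i) Ls"
  have T: "?T = take i Ls @ [Ls ! i]" using i by (simp add: take_Suc_conv_app_nth)
  have "chainL m e ?T" using c linkedL_take unfolding chainL_def by (auto dest: in_set_takeD)
  moreover have "fst (hd ?T) = fst (hd Ls)" using c by (cases Ls) (auto simp: chainL_def)
  moreover have "last ?T = Ls ! i" using T by simp
  ultimately show ?thesis unfolding Link_def by (intro exI[of _ ?T]) simp
qed

lemma Link_hd_hd: "chainL m e Ls \<Longrightarrow> Link m e (fst (hd Ls)) (fst (hd Ls))"
proof -
  assume c: "chainL m e Ls"
  have "Link m e (fst (hd Ls)) (fst (snd (last Ls)))" unfolding Link_def using c by blast
  then show ?thesis using Link_sym Link_trans by blast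
qed

lemma Link_hd_a: "chainL m e Ls \<Longrightarrow> i < length Ls \<Longrightarrow> Link m e (fst (hd Ls)) (fst (Ls ! i))"
proof (cases i)
  case 0
  assume c: "chainL m e Ls" and "i < length Ls"
  then have "hd Ls = Ls ! 0" by (simp add: chainL_def hd_conv_nth)
  then show ?thesis using Link_hd_hd[OF c] 0 by simp
next
  case (Suc j)
  assume c: "chainL m e Ls" and i: "i < length Ls"
  have "fst (snd (Ls ! j)) = fst (Ls ! Suc j)" using c i Suc unfolding chainL_def linkedL_nth by simp
  then show ?thesis using Link_hd_b[OF c, of j] i Suc by simp
qed

lemma Link_hd_pts: "chainL m e Ls \<Longrightarrow> p \<in> ptsL Ls \<Longrightarrow> Link m e (fst (hd Ls)) p"
proof -
  assume c: "chainL m e Ls" and p: "p \<in> ptsL Ls"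
  then obtain t where t: "t \<in> set Ls" "p = fst t \<or> p = fst (snd t)" unfolding ptsL_def by blast
  then obtain i where i: "i < length Ls" "Ls ! i = t" by (auto simp: in_set_conv_nth)
  from t(2) show ?thesis
  proof
    assume "p = fst t" then show ?thesis using Link_hd_a[OF c i(1)] i(2) by simp
  next
    assume "p = fst (snd t)" then show ?thesis using Link_hd_b[OF c i(1)] i(2) by simp
  qed
qed

lemma Link_pts: "chainL m e Ls \<Longrightarrow> p \<in> ptsL Ls \<Longrightarrow> q \<in> ptsL Ls \<Longrightarrow> Link m e p q"
  using Link_hd_pts Link_sym Link_trans by metis

lemma Link_chain: "Link m e p q \<Longrightarrow> \<exists>Ls. chainL m e Ls \<and> p \<in> ptsL Ls \<and> q \<in> ptsL Ls"
proof -
  assume "Link m e p q"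
  then obtain Ls where Ls: "chainL m e Ls" "fst (hd Ls) = p" "fst (snd (last Ls)) = q" unfolding Link_def by blast
  have "hd Ls \<in> set Ls" "last Ls \<in> set Ls" using Ls(1) by (auto simp: chainL_def)
  then have "p \<in> ptsL Ls" "q \<in> ptsL Ls" using Ls(2,3) unfolding ptsL_def by force+
  then show ?thesis using Ls(1) by blast
qed

definition act :: "nat \<Rightarrow> nat \<Rightarrow> nat \<Rightarrow> nat set \<Rightarrow> bool" where
  "act m v e S \<longleftrightarrow> (\<exists>x. v = ptv e x \<and> S = {x}) \<or> (\<exists>Ls. v = witv e Ls \<and> chainL m e Ls \<and> S = ptsL Ls)"

lemma act_unique: "act m v e S \<Longrightarrow> act m v e' S' \<Longrightarrow> e = e' \<and> S = S'"
  unfolding act_def by auto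

lemma ptsL_ne: "chainL m e Ls \<Longrightarrow> ptsL Ls \<noteq> {}"
  unfolding chainL_def ptsL_def by auto

lemma act_ne: "act m v e S \<Longrightarrow> S \<noteq> {}"
  unfolding act_def using ptsL_ne by auto

lemma act_ge: "act m v e S \<Longrightarrow> 4 \<le> v"
  unfolding act_def by auto

lemma edge_act:
  assumes "Gr m c d" "4 \<le> c"
  shows "\<exists>e Sc Sd r. act m c e Sc \<and> act m d e Sd \<and> r \<in> Sd \<and> (\<forall>q\<in>Sc. Link m e q r)"
proof -
  have dne: "\<not> d < 4" using Gr_big[OF assms(2,1)] by simp
  have dj: "\<not> (4 \<le> d \<and> 2 \<le> pfst (d - 4))" using Gr_junk Gr_sym assms(1) by blast
  show ?thesis
  proof (cases c rule: vertex_cases)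
    case 1 then show ?thesis using assms(2) by simp
  next
    case (2 e x)
    show ?thesis
    proof (cases d rule: vertex_cases)
      case 1 then show ?thesis using dne by simp
    next
      case (2 e' y) then show ?thesis using assms(1) \<open>c = ptv e x\<close> Gr_pt_pt by simp
    next
      case (3 e' Ls)
      then have h: "e = e'" "x \<in> ptsL Ls" "chainL m e' Ls" using assms(1) \<open>c = ptv e x\<close> Gr_pt_wit by simp_all
      have "act m c e {x}" "act m d e (ptsL Ls)" using h 3 \<open>c = ptv e x\<close> unfolding act_def by auto
      moreover have "Link m e x x" using Link_pts h by blast
      ultimately show ?thesis using h(2) by blast
    next
      case 4 then show ?thesis using dj by simp
    qed
  next
    case (3 e Ls)
    have cL: "chainL m e Ls" and actc: "act m c e (ptsL Ls)"
    proof -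
      show cL: "chainL m e Ls"
      proof (cases d rule: vertex_cases)
        case 1 then show ?thesis using dne by simp
      next
        case (2 e' y) then show ?thesis using assms(1) 3 Gr_wit_pt by simp
      next
        case (3 e' L2) then show ?thesis using assms(1) \<open>c = witv e Ls\<close> Gr_wit_wit by auto
      next
        case 4 then show ?thesis using dj by simp
      qed
      then show "act m c e (ptsL Ls)" using 3 unfolding act_def by auto
    qed
    show ?thesis
    proof (cases d rule: vertex_cases)
      case 1 then show ?thesis using dne by simp
    next
      case (2 e' y)
      then have h: "e' = e" "y \<in> ptsL Ls" using assms(1) 3 Gr_wit_pt by simp_all
      have "act m d e {y}" using 2 h unfolding act_def by auto
      moreover have "\<forall>q\<in>ptsL Ls. Link m e q y" using Link_pts cL h(2) by blast
      ultimately show ?thesis using actc by blast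
    next
      case (3 e' L2)
      then have h: "e' = e" "ptsL Ls \<inter> ptsL L2 \<noteq> {}" "chainL m e L2"
        using assms(1) \<open>c = witv e Ls\<close> Gr_wit_wit by simp_all
      then obtain r where r: "r \<in> ptsL Ls" "r \<in> ptsL L2" by blast
      have "act m d e (ptsL L2)" using 3 h unfolding act_def by auto
      moreover have "\<forall>q\<in>ptsL Ls. Link m e q r" using Link_pts cL r(1) by blast
      ultimately show ?thesis using actc r(2) by blast
    next
      case 4 then show ?thesis using dj by simp
    qed
  next
    case 4 then show ?thesis using Gr_junk assms(1) by blast
  qed
qed

definition Gset :: "nat \<Rightarrow> (nat \<times> nat) set" where "Gset m = {(a, b). Gr m a b}"

lemma Gset_iff[simp]: "(a, b) \<in> Gset m \<longleftrightarrow> Gr m a b" by (simp add: Gset_def)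

lemma reach_act:
  assumes "(a, c) \<in> (Gset m)\<^sup>*" "4 \<le> a"
  shows "c = a \<or> (\<exists>e Sa Sc. act m a e Sa \<and> act m c e Sc \<and> (\<exists>p\<in>Sa. \<exists>q\<in>Sc. Link m e p q))"
  using assms(1)
proof (induction rule: rtrancl_induct)
  case base then show ?case by simp
next
  case (step c d)
  have cd: "Gr m c d" using step.hyps(2) by simp
  from step.IH show ?case
  proof
    assume "c = a"
    then obtain e Sc Sd r where h: "act m a e Sc" "act m d e Sd" "r \<in> Sd" "\<forall>q\<in>Sc. Link m e q r"
      using edge_act[OF cd] assms(2) by blast
    obtain q where "q \<in> Sc" using act_ne[OF h(1)] by blast
    then show ?thesis using h by blast
  next
    assume "\<exists>e Sa Sc. act m a e Sa \<and> act m c e Sc \<and> (\<exists>p\<in>Sa. \<exists>q\<in>Sc. Link m e p q)"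
    then obtain e Sa Sc p q where h: "act m a e Sa" "act m c e Sc" "p \<in> Sa" "q \<in> Sc" "Link m e p q" by blast
    obtain e' Sc' Sd r where h2: "act m c e' Sc'" "act m d e' Sd" "r \<in> Sd" "\<forall>q\<in>Sc'. Link m e' q r"
      using edge_act[OF cd act_ge[OF h(2)]] by blast
    have "e' = e" "Sc' = Sc" using act_unique[OF h2(1) h(2)] by simp_all
    then have "Link m e p r" using Link_trans h(4,5) h2(4) by blast
    then show ?thesis using h(1,3) h2(2,3) \<open>e' = e\<close> by blast
  qed
qed

lemma attach:
  assumes "act m v e S" "chainL m e Ls" "r \<in> S" "r \<in> ptsL Ls"
  shows "v = witv e Ls \<or> Gr m v (witv e Ls)"
  using assms unfolding act_def by (auto simp: Gr_pt_wit Gr_wit_wit)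

lemma relpow1: "Gr m a b \<Longrightarrow> (a, b) \<in> (Gset m) ^^ 1" by simp
lemma relpow2: "Gr m a c \<Longrightarrow> Gr m c b \<Longrightarrow> (a, b) \<in> (Gset m) ^^ 2"
  using relpow_Suc_I[OF relpow1[of m a c], of b] by (simp add: numeral_2_eq_2)

lemma dist_big:
  assumes "(a, b) \<in> (Gset m)\<^sup>*" "4 \<le> a"
  shows "\<exists>k\<le>2. (a, b) \<in> (Gset m) ^^ k"
proof (cases "a = b")
  case True then show ?thesis by (intro exI[of _ 0]) simp
next
  case False
  then obtain e Sa Sb p q where h: "act m a e Sa" "act m b e Sb" "p \<in> Sa" "q \<in> Sb" "Link m e p q"
    using reach_act[OF assms] by blast
  then obtain Ls where Ls: "chainL m e Ls" "p \<in> ptsL Ls" "q \<in> ptsL Ls" using Link_chain by blast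
  have A: "a = witv e Ls \<or> Gr m a (witv e Ls)" using attach[OF h(1) Ls(1) h(3) Ls(2)] .
  have B: "b = witv e Ls \<or> Gr m (witv e Ls) b" using attach[OF h(2) Ls(1) h(4) Ls(3)] Gr_sym by blast
  show ?thesis
  proof (cases "a = witv e Ls")
    case True
    then have "Gr m a b" using B False by auto
    then show ?thesis by (intro exI[of _ 1]) simp
  next
    case aW: False
    show ?thesis
    proof (cases "b = witv e Ls")
      case True
      then have "Gr m a b" using A aW by auto
      then show ?thesis by (intro exI[of _ 1]) simp
    next
      case False
      then show ?thesis using A B aW relpow2 by blast
    qed
  qed
qed

lemma small_closed: "(a, b) \<in> (Gset m)\<^sup>* \<Longrightarrow> a < 4 \<Longrightarrow> b < 4"
  by (induction rule: rtrancl_induct) (auto simp: Gr_small)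

lemma up_path: "i + j < 4 \<Longrightarrow> (i, i + j) \<in> (Gset m) ^^ j"
proof (induction j)
  case 0 then show ?case by simp
next
  case (Suc j)
  have g: "(i + j, i + Suc j) \<in> Gset m" using Suc.prems by (simp add: Gr_small)
  have ih: "(i, i + j) \<in> Gset m ^^ j" using Suc by simp
  show ?case using relpow_Suc_I[OF ih g] .
qed

lemma down_path: "i + j < 4 \<Longrightarrow> (i + j, i) \<in> (Gset m) ^^ j"
proof (induction j)
  case 0 then show ?case by simp
next
  case (Suc j)
  have g: "(i + Suc j, i + j) \<in> Gset m" using Suc.prems by (simp add: Gr_small)
  have ih: "(i + j, i) \<in> Gset m ^^ j" using Suc by simp
  show ?case using relpow_Suc_I2[OF g ih] .
qed

lemma dist_small: "a < 4 \<Longrightarrow> b < 4 \<Longrightarrow> \<exists>k\<le>3. (a, b) \<in> (Gset m) ^^ k"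
proof (cases "a \<le> b")
  case True
  assume "a < 4" "b < 4"
  then show ?thesis using up_path[of a "b - a" m] True by (intro exI[of _ "b - a"]) simp
next
  case False
  assume "a < 4" "b < 4"
  then show ?thesis using down_path[of b "a - b" m] False by (intro exI[of _ "a - b"]) simp
qed

lemma paths3: "paths_bounded (Gset m) 3"
  unfolding paths_bounded_def
proof (intro allI impI)
  fix a b assume ab: "(a, b) \<in> (Gset m)\<^sup>*"
  show "\<exists>k\<le>3. (a, b) \<in> Gset m ^^ k"
  proof (cases "a < 4")
    case True then show ?thesis using dist_small small_closed[OF ab] by blast
  next
    case False
    then obtain k where "k \<le> 2" "(a, b) \<in> Gset m ^^ k" using dist_big[OF ab] by force
    then show ?thesis by (intro exI[of _ k]) simp
  qed
qed

lemma not_paths2: "\<not> paths_bounded (Gset m) 2"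
proof
  assume pb: "paths_bounded (Gset m) 2"
  have "(0, 3) \<in> (Gset m)\<^sup>*" using up_path[of 0 3 m] relpow_imp_rtrancl by simp
  then obtain k where k: "k \<le> 2" "(0, 3) \<in> Gset m ^^ k" using pb unfolding paths_bounded_def by blast
  have "k = 0 \<or> k = 1 \<or> k = 2" using k(1) by auto
  then show False
  proof (elim disjE)
    assume "k = 0" then show False using k(2) by simp
  next
    assume "k = 1" then show False using k(2) by (simp add: Gr_small)
  next
    assume "k = 2"
    then have "(0, 3) \<in> Gset m ^^ Suc (Suc 0)" using k(2) by (simp only: numeral_2_eq_2)
    then obtain y where y: "(0, y) \<in> Gset m ^^ Suc 0" "(y, 3) \<in> Gset m" by (rule relpow_Suc_E)
    then have "Gr m 0 y" by simp
    then have "y = 1" by (simp add: Gr_small)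
    then show False using y(2) by (simp add: Gr_small)
  qed
qed

lemma diam3: "graph_diameter (Gset m) 3"
  unfolding graph_diameter_def
proof (intro conjI allI impI)
  show "paths_bounded (Gset m) 3" by (rule paths3)
  fix j :: nat assume "j < 3"
  show "\<not> paths_bounded (Gset m) j"
  proof
    assume "paths_bounded (Gset m) j"
    then have "paths_bounded (Gset m) 2" using \<open>j < 3\<close> unfolding paths_bounded_def
    proof (intro allI impI)
      fix x y assume h: "\<forall>x y. (x, y) \<in> (Gset m)\<^sup>* \<longrightarrow> (\<exists>k\<le>j. (x, y) \<in> Gset m ^^ k)" "j < 3"
        and xy: "(x, y) \<in> (Gset m)\<^sup>*"
      then obtain k where "k \<le> j" "(x, y) \<in> Gset m ^^ k" by blast
      then show "\<exists>k\<le>2. (x, y) \<in> Gset m ^^ k" using h(2) by (intro exI[of _ k]) simp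
    qed
    then show False using not_paths2 by blast
  qed
qed

lemma Pi_GrI: "rf k f \<Longrightarrow> rf k g \<Longrightarrow> Pi_rel m k (\<lambda>xs. Gr m (f xs) (g xs))"
  by (rule Pi_subst2[OF Pi_Gr])

definition Dw :: "nat \<Rightarrow> nat \<Rightarrow> nat \<Rightarrow> nat \<Rightarrow> bool" where
  "Dw m w a b \<longleftrightarrow> a = b \<or> Gr m a b \<or> (Gr m a (pfst w) \<and> Gr m (pfst w) b) \<or>
     (Gr m a (pfst w) \<and> Gr m (pfst w) (psnd w) \<and> Gr m (psnd w) b)"

lemma Pi_Dw: "Pi_rel m 3 (\<lambda>ys. Dw m (ys ! 0) (ys ! 1) (ys ! 2))"
  unfolding Dw_def
  by (intro Pi_or Pi_and Pi_GrI crel_Pi[OF crel_eq] rfI; simp)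

lemma rt_iff: "(a, b) \<in> (Gset m)\<^sup>* \<longleftrightarrow> (\<exists>w. Dw m w a b)"
proof
  assume ab: "(a, b) \<in> (Gset m)\<^sup>*"
  then obtain k where k: "k \<le> 3" "(a, b) \<in> Gset m ^^ k" using paths3[of m] unfolding paths_bounded_def by blast
  have "k = 0 \<or> k = Suc 0 \<or> k = Suc (Suc 0) \<or> k = Suc (Suc (Suc 0))" using k(1) by auto
  then show "\<exists>w. Dw m w a b"
  proof (elim disjE)
    assume "k = 0" then show ?thesis using k(2) by (auto simp: Dw_def)
  next
    assume "k = Suc 0" then show ?thesis using k(2) by (auto simp: Dw_def)
  next
    assume "k = Suc (Suc 0)"
    then obtain c where "(a, c) \<in> Gset m ^^ Suc 0" "(c, b) \<in> Gset m" using k(2) by (auto elim: relpow_Suc_E)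
    then have "Gr m a c" "Gr m c b" by simp_all
    then show ?thesis unfolding Dw_def by (intro exI[of _ "pe c 0"]) simp
  next
    assume "k = Suc (Suc (Suc 0))"
    then have "(a, b) \<in> Gset m ^^ Suc (Suc (Suc 0))" using k(2) by (simp only:)
    then obtain d where d: "(a, d) \<in> Gset m ^^ Suc (Suc 0)" "(d, b) \<in> Gset m" by (rule relpow_Suc_E)
    from d(1) obtain c where "(a, c) \<in> Gset m ^^ Suc 0" "(c, d) \<in> Gset m" by (rule relpow_Suc_E)
    then have "Gr m a c" "Gr m c d" "Gr m d b" using d(2) by simp_all
    then show ?thesis unfolding Dw_def by (intro exI[of _ "pe c d"]) simp
  qed
next
  assume "\<exists>w. Dw m w a b"
  then obtain w where "Dw m w a b" by blast
  then show "(a, b) \<in> (Gset m)\<^sup>*" unfolding Dw_def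
    apply (elim disjE conjE)
       apply simp
      apply (rule r_into_rtrancl, simp)
     apply (rule converse_rtrancl_into_rtrancl[of _ "pfst w"], simp, rule r_into_rtrancl, simp)
    apply (rule converse_rtrancl_into_rtrancl[of _ "pfst w"], simp,
        rule converse_rtrancl_into_rtrancl[of _ "psnd w"], simp, rule r_into_rtrancl, simp)
    done
qed

lemma Sigma_E: "Sigma_binrel (Suc m) ((Gset m)\<^sup>*)"
  unfolding Sigma_binrel_def
proof -
  have s: "Sigma_rel m 3 (\<lambda>ys. \<not> Dw m (ys ! 0) (ys ! 1) (ys ! 2))" using Pi_Dw unfolding Pi_rel_def .
  show "Sigma_rel (Suc m) 2 (as_rel2 ((Gset m)\<^sup>*))"
    by (rule SigmaN[OF s]) (simp_all add: as_rel2_def rt_iff)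
qed

lemma chain_ends:
  assumes F: "equiv UNIV F" and R: "\<forall>a b z. Rv m e z a b \<longrightarrow> (a, b) \<in> F"
  shows "Ls \<noteq> [] \<Longrightarrow> linkedL Ls \<Longrightarrow> \<forall>t\<in>set Ls. Rokt m e t \<Longrightarrow> (fst (hd Ls), fst (snd (last Ls))) \<in> F"
proof (induction Ls)
  case Nil then show ?case by simp
next
  case (Cons t ts)
  have symF: "sym F" and trF: "trans F" using F by (simp_all add: equiv_def)
  have tF: "(fst t, fst (snd t)) \<in> F"
    using Cons.prems(3) R symF unfolding Rokt_def by (auto dest: symD)
  show ?case
  proof (cases "ts = []")
    case True then show ?thesis using tF by simp
  next
    case False
    have "fst (snd t) = fst (hd ts)" "linkedL ts" using Cons.prems(2) False by (simp_all add: linkedL_Cons2)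
    then have "(fst (snd t), fst (snd (last ts))) \<in> F" using Cons.IH False Cons.prems(3) by simp
    then show ?thesis using tF trF False by (auto dest: transD)
  qed
qed

lemma chain_F:
  assumes F: "equiv UNIV F" and R: "\<forall>a b z. Rv m e z a b \<longrightarrow> (a, b) \<in> F"
    and c: "chainL m e Ls" and p: "p \<in> ptsL Ls" and q: "q \<in> ptsL Ls"
  shows "(p, q) \<in> F"
proof -
  obtain L where L: "chainL m e L" "fst (hd L) = p" "fst (snd (last L)) = q"
    using Link_pts[OF c p q] unfolding Link_def by blast
  show ?thesis using chain_ends[OF F R] L unfolding chainL_def by auto
qed

lemma reach_pt:
  assumes F: "equiv UNIV F" and R: "\<forall>a b z. Rv m e z a b \<longrightarrow> (a, b) \<in> F"
    and r: "(ptv e x, c) \<in> (Gset m)\<^sup>*"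
  shows "(\<exists>y. c = ptv e y \<and> (x, y) \<in> F) \<or> (\<exists>Ls. c = witv e Ls \<and> chainL m e Ls \<and> (\<forall>p\<in>ptsL Ls. (x, p) \<in> F))"
  using r
proof (induction rule: rtrancl_induct)
  case base
  have "(x, x) \<in> F" using F by (simp add: equiv_def refl_on_def)
  then show ?case by blast
next
  case (step c d)
  have cd: "Gr m c d" using step.hyps(2) by simp
  have trF: "trans F" using F by (simp add: equiv_def)
  from step.IH show ?case
  proof (elim disjE exE conjE)
    fix y assume c: "c = ptv e y" and xy: "(x, y) \<in> F"
    show ?thesis
    proof (cases d rule: vertex_cases)
      case 1 then show ?thesis using Gr_big[OF _ cd] c by simp
    next
      case (2 e' y') then show ?thesis using cd c Gr_pt_pt by simp
    next
      case (3 e' Ls)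
      then have h: "e = e'" "y \<in> ptsL Ls" "chainL m e' Ls" using cd c Gr_pt_wit by simp_all
      have "\<forall>p\<in>ptsL Ls. (x, p) \<in> F"
        using chain_F[OF F R] h xy trF by (blast dest: transD)
      then show ?thesis using 3 h by blast
    next
      case 4 then show ?thesis using Gr_junk Gr_sym cd by blast
    qed
  next
    fix Ls assume c: "c = witv e Ls" and cL: "chainL m e Ls" and all: "\<forall>p\<in>ptsL Ls. (x, p) \<in> F"
    show ?thesis
    proof (cases d rule: vertex_cases)
      case 1 then show ?thesis using Gr_big[OF _ cd] c by simp
    next
      case (2 e' y')
      then have "e' = e" "y' \<in> ptsL Ls" using cd c Gr_wit_pt by simp_all
      then show ?thesis using 2 all by blast
    next
      case (3 e' L2)
      then have h: "e' = e" "ptsL Ls \<inter> ptsL L2 \<noteq> {}" "chainL m e L2" using cd c Gr_wit_wit by auto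
      then obtain r where r: "r \<in> ptsL Ls" "r \<in> ptsL L2" by blast
      have "\<forall>p\<in>ptsL L2. (x, p) \<in> F"
        using chain_F[OF F R h(3) r(2)] all r(1) trF by (blast dest: transD)
      then show ?thesis using 3 h by blast
    next
      case 4 then show ?thesis using Gr_junk Gr_sym cd by blast
    qed
  qed
qed

lemma rf_ptv: "rf 1 (\<lambda>xs. ptv e (xs ! 0))"
  unfolding ptv_def by (intro rfI; simp)

lemma universal_E: "universal_Sigma_eqrel (Suc m) ((Gset m)\<^sup>*)"
  unfolding universal_Sigma_eqrel_def
proof (intro conjI allI impI)
  have "sym (Gset m)" by (rule symI) (simp add: Gr_sym)
  then show "equiv UNIV ((Gset m)\<^sup>*)"
    by (intro equivI refl_rtrancl sym_rtrancl trans_rtrancl) auto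
  show "Sigma_binrel (Suc m) ((Gset m)\<^sup>*)" by (rule Sigma_E)
  fix F assume hF: "equiv UNIV F \<and> Sigma_binrel (Suc m) F"
  then have F: "equiv UNIV F" and sF: "Sigma_rel (Suc m) 2 (as_rel2 F)" by (simp_all add: Sigma_binrel_def)
  obtain e where e: "\<forall>xs. length xs = 2 \<longrightarrow> (as_rel2 F xs \<longleftrightarrow> Usig m e (list_encode xs))"
    using Un_universal[OF sF] by blast
  have Fiff: "(x, y) \<in> F \<longleftrightarrow> (\<exists>z. Rv m e z x y)" for x y
    using e[rule_format, of "[x, y]"] by (simp add: as_rel2_def Usig_def Rv_def enc2_list del: list_encode.simps)
  have R: "\<forall>a b z. Rv m e z a b \<longrightarrow> (a, b) \<in> F" using Fiff by blast
  obtain g where g: "recfn 1 g" "\<forall>xs. length xs = 1 \<longrightarrow> g xs = ptv e (xs ! 0)"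
    using rf_ptv[of e] unfolding rf_def by blast
  have cf: "computable_fun (ptv e)"
    unfolding computable_fun_def using g by (intro exI[of _ g]) simp
  have red: "(x, y) \<in> F \<longleftrightarrow> (ptv e x, ptv e y) \<in> (Gset m)\<^sup>*" for x y
  proof
    assume xy: "(x, y) \<in> F"
    then obtain z where z: "Rv m e z x y" using Fiff by blast
    define Ls where "Ls = [(x, y, z)]"
    have cL: "chainL m e Ls" unfolding Ls_def chainL_def Rokt_def using z by simp
    have pts: "x \<in> ptsL Ls" "y \<in> ptsL Ls" unfolding Ls_def ptsL_def by simp_all
    have "Gr m (ptv e x) (witv e Ls)" "Gr m (witv e Ls) (ptv e y)"
      using cL pts by (simp_all add: Gr_pt_wit Gr_wit_pt)
    then show "(ptv e x, ptv e y) \<in> (Gset m)\<^sup>*"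
      by (meson Gset_iff converse_rtrancl_into_rtrancl r_into_rtrancl)
  next
    assume "(ptv e x, ptv e y) \<in> (Gset m)\<^sup>*"
    from reach_pt[OF F R this] show "(x, y) \<in> F" by auto
  qed
  show "\<exists>f. computable_fun f \<and> (\<forall>x y. (x, y) \<in> F \<longleftrightarrow> (f x, f y) \<in> (Gset m)\<^sup>*)"
    using cf red by blast
qed

lemma graphable_E: "Pi_graphable_diam m ((Gset m)\<^sup>*) 3"
  unfolding Pi_graphable_diam_def
proof (intro exI[of _ "Gset m"] conjI)
  show "simple_graph (Gset m)" unfolding simple_graph_def
    by (intro conjI symI irreflI) (simp_all add: Gr_sym Gr_irrefl)
  show "Pi_binrel m (Gset m)" unfolding Pi_binrel_def
    using Pi_Gr[of m] by (rule Pi_cong) (simp add: as_rel2_def)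
  show "(Gset m)\<^sup>* = (Gset m)\<^sup>*" ..
  show "graph_diameter (Gset m) 3" by (rule diam3)
qed

theorem proposition2p6:
  fixes n :: nat
  assumes "n \<ge> 1"
  shows "\<exists>E. universal_Sigma_eqrel n E \<and> Pi_graphable_diam (n - 1) E 3"
proof -
  obtain m where n: "n = Suc m" using assms by (cases n) auto
  show ?thesis unfolding n using universal_E[of m] graphable_E[of m] by auto
qed

end
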